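(* Let $\nu\in\mathbb{N}$ and $p\in(0,1)$, and let $G_\nu,g_\nu$ be the c.d.f. and p.d.f. of Student's $t$-distribution with $\nu$ degrees of freedom. For $k\in\mathbb{N}$ let $h_k^{(2)}$ be the unique real solution $h$ of $\Big[\int_{-\infty}^{\infty}G_\nu(t+h)g_\nu(t)\,dt\Big]^k=p$. Let $q_p$ be the $p$-th quantile of the $\nu$-Fréchet distribution (c.d.f. $x\mapsto\exp(-x^{-\nu})$ for $x>0$), and let $$\gamma_\nu:=\Bigg[\frac{\Gamma(\frac{\nu+1}{2})}{\nu^{1-\frac{\nu}{2}}\sqrt{\pi}\,\Gamma(\frac{\nu}{2})}\Bigg]^{1/\nu}.$$ Then $h_k^{(2)}\sim2^{1/\nu}\gamma_\nu k^{1/\nu}q_p$ as $k\to\infty$.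
   Context: $a_k\sim b_k$ means $a_k/b_k\to1$ as $k\to\infty$. *)

theory Defs
  imports "HOL-Analysis.Analysis" "HOL-Library.Landau_Symbols"
begin

definition student_t_pdf :: "nat \<Rightarrow> real \<Rightarrow> real" where
  "student_t_pdf \<nu> t =
     Gamma ((real \<nu> + 1) / 2) / (sqrt (real \<nu> * pi) * Gamma (real \<nu> / 2))
     * (1 + t\<^sup>2 / real \<nu>) powr (- (real \<nu> + 1) / 2)"

definition student_t_cdf :: "nat \<Rightarrow> real \<Rightarrow> real" where
  "student_t_cdf \<nu> x = (LBINT t:{..x}. student_t_pdf \<nu> t)"

definition h2 :: "nat \<Rightarrow> real \<Rightarrow> nat \<Rightarrow> real" where
  "h2 \<nu> p k = (THE h. (LINT t|lborel. student_t_cdf \<nu> (t + h) * student_t_pdf \<nu> t) ^ k = p)"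

definition frechet_quantile :: "nat \<Rightarrow> real \<Rightarrow> real" where
  "frechet_quantile \<nu> p = (THE q. q > 0 \<and> exp (- (q powr (- real \<nu>))) = p)"

definition gamma_nu :: "nat \<Rightarrow> real" where
  "gamma_nu \<nu> = (Gamma ((real \<nu> + 1) / 2) /
      (real \<nu> powr (1 - real \<nu> / 2) * sqrt pi * Gamma (real \<nu> / 2))) powr (1 / real \<nu>)"

end

theory Submission
  imports Defs "HOL-Probability.Probability" "HOL-Real_Asymp.Real_Asymp"
begin

lemma gamma_scaled_nn:
  fixes b c :: real
  assumes b: "b > 0" and c: "c > 0"
  shows "(\<integral>\<^sup>+y. ennreal (indicator {0..} y * y powr (b - 1) * exp (- (c * y))) \<partial>lborel)
         = ennreal (Gamma b / c powr b)"
proof -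
  define f where "f = (\<lambda>y::real. ennreal (indicator {0..} y * y powr (b - 1) / exp y))"
  have fm: "f \<in> borel_measurable borel" unfolding f_def by measurable
  have "ennreal (Gamma b) = (\<integral>\<^sup>+y. f y \<partial>lborel)"
    unfolding f_def using Gamma_conv_nn_integral_real[OF b] by simp
  also have "\<dots> = ennreal \<bar>c\<bar> * (\<integral>\<^sup>+x. f (0 + c * x) \<partial>lborel)"
    using nn_integral_real_affine[OF fm, of c 0] c by simp
  also have "(\<integral>\<^sup>+x. f (0 + c * x) \<partial>lborel) = (\<integral>\<^sup>+x. ennreal (c powr (b - 1)) *
        ennreal (indicator {0..} x * x powr (b - 1) * exp (- (c * x))) \<partial>lborel)"
  proof (intro nn_integral_cong)
    fix x :: real
    show "f (0 + c * x) = ennreal (c powr (b - 1)) *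
        ennreal (indicator {0..} x * x powr (b - 1) * exp (- (c * x)))"
      using c unfolding f_def
      by (auto simp: indicator_def ennreal_mult'[symmetric] powr_mult exp_minus
            field_simps zero_le_mult_iff)
  qed
  also have "\<dots> = ennreal (c powr (b - 1)) * (\<integral>\<^sup>+x.
        ennreal (indicator {0..} x * x powr (b - 1) * exp (- (c * x))) \<partial>lborel)"
    by (rule nn_integral_cmult) auto
  finally have eq: "ennreal (Gamma b) = ennreal (c * c powr (b - 1)) * (\<integral>\<^sup>+x.
        ennreal (indicator {0..} x * x powr (b - 1) * exp (- (c * x))) \<partial>lborel)"
    using c by (simp add: ennreal_mult' mult.assoc)
  have cc: "c * c powr (b - 1) = c powr b" using c
    by (simp add: powr_diff powr_one)
  have pos: "c powr b > 0" using c by simp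
  have "ennreal (Gamma b / c powr b) = ennreal (Gamma b) * ennreal (1 / c powr b)"
    using pos by (simp add: ennreal_mult'[symmetric] Gamma_real_pos b less_imp_le)
  also have "\<dots> = (\<integral>\<^sup>+x. ennreal (indicator {0..} x * x powr (b - 1) * exp (- (c * x))) \<partial>lborel)
      * (ennreal (c powr b) * ennreal (1 / c powr b))"
    unfolding eq cc by (simp add: mult_ac)
  also have "ennreal (c powr b) * ennreal (1 / c powr b) = 1"
    using pos by (simp add: ennreal_mult'[symmetric])
  finally show ?thesis by simp
qed

lemma gauss_scaled_nn:
  fixes y n :: real
  assumes y: "y > 0" and n: "n > 0"
  shows "(\<integral>\<^sup>+t. ennreal (exp (- (y * t\<^sup>2 / n))) \<partial>lborel) = ennreal (sqrt (pi * n / y))"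
proof -
  define \<sigma> where "\<sigma> = sqrt (n / (2 * y))"
  have sp: "\<sigma> > 0" unfolding \<sigma>_def using y n by simp
  have s2: "\<sigma>\<^sup>2 = n / (2 * y)" unfolding \<sigma>_def using y n by simp
  have pt: "ennreal (exp (- (y * t\<^sup>2 / n))) = ennreal (sqrt (pi * n / y)) * ennreal (normal_density 0 \<sigma> t)" for t
  proof -
    have "exp (- (y * t\<^sup>2 / n)) = sqrt (pi * n / y) * normal_density 0 \<sigma> t"
      unfolding normal_density_def s2 using y n
      by (simp add: field_simps real_sqrt_divide real_sqrt_mult)
    thus ?thesis using y n by (simp add: ennreal_mult[symmetric])
  qed
  have "(\<integral>\<^sup>+t. ennreal (exp (- (y * t\<^sup>2 / n))) \<partial>lborel) =
      ennreal (sqrt (pi * n / y)) * (\<integral>\<^sup>+t. ennreal (normal_density 0 \<sigma> t) \<partial>lborel)"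
    unfolding pt by (rule nn_integral_cmult) auto
  also have "(\<integral>\<^sup>+t. ennreal (normal_density 0 \<sigma> t) \<partial>lborel) = 1"
    using sp by (subst nn_integral_eq_integral) (auto intro!: integrable_normal_density)
  finally show ?thesis by simp
qed

lemma student_kernel_nn:
  fixes n :: real
  assumes n: "n > 0"
  shows "(\<integral>\<^sup>+t. ennreal ((1 + t\<^sup>2 / n) powr (- (n + 1) / 2)) \<partial>lborel)
       = ennreal (sqrt (pi * n) * Gamma (n / 2) / Gamma ((n + 1) / 2))"
proof -
  define a where "a = (n + 1) / 2"
  have a: "a > 0" unfolding a_def using n by simp
  have Ga: "Gamma a > 0" using a by (simp add: Gamma_real_pos)
  have "ennreal (Gamma a) * (\<integral>\<^sup>+t. ennreal ((1 + t\<^sup>2 / n) powr (- a)) \<partial>lborel)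
      = (\<integral>\<^sup>+t. ennreal (Gamma a * (1 + t\<^sup>2 / n) powr (- a)) \<partial>lborel)"
    by (subst nn_integral_cmult[symmetric]) (auto simp: ennreal_mult Ga less_imp_le)
  also have "\<dots> = (\<integral>\<^sup>+t. \<integral>\<^sup>+y. ennreal (indicator {0..} y * y powr (a - 1) * exp (- ((1 + t\<^sup>2 / n) * y))) \<partial>lborel \<partial>lborel)"
  proof (intro nn_integral_cong)
    fix t :: real
    have c: "1 + t\<^sup>2 / n > 0" using n by (simp add: add_pos_nonneg)
    show "ennreal (Gamma a * (1 + t\<^sup>2 / n) powr (- a)) =
      (\<integral>\<^sup>+y. ennreal (indicator {0..} y * y powr (a - 1) * exp (- ((1 + t\<^sup>2 / n) * y))) \<partial>lborel)"
      using gamma_scaled_nn[OF a c] c by (simp add: powr_minus divide_inverse)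
  qed
  also have "\<dots> = (\<integral>\<^sup>+y. \<integral>\<^sup>+t. ennreal (indicator {0..} y * y powr (a - 1) * exp (- ((1 + t\<^sup>2 / n) * y))) \<partial>lborel \<partial>lborel)"
    by (subst lborel_pair.Fubini') (auto simp: case_prod_unfold)
  also have "\<dots> = (\<integral>\<^sup>+y. ennreal (sqrt (pi * n)) * ennreal (indicator {0..} y * y powr (n / 2 - 1) / exp y) \<partial>lborel)"
  proof (intro nn_integral_cong)
    fix y :: real
    show "(\<integral>\<^sup>+t. ennreal (indicator {0..} y * y powr (a - 1) * exp (- ((1 + t\<^sup>2 / n) * y))) \<partial>lborel)
        = ennreal (sqrt (pi * n)) * ennreal (indicator {0..} y * y powr (n / 2 - 1) / exp y)"
    proof (cases "y > 0")
      case True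
      have "(\<integral>\<^sup>+t. ennreal (indicator {0..} y * y powr (a - 1) * exp (- ((1 + t\<^sup>2 / n) * y))) \<partial>lborel)
          = (\<integral>\<^sup>+t. ennreal (y powr (a - 1) * exp (- y)) * ennreal (exp (- (y * t\<^sup>2 / n))) \<partial>lborel)"
      proof (intro nn_integral_cong)
        fix t :: real
        have e: "- ((1 + t\<^sup>2 / n) * y) = - y + - (y * t\<^sup>2 / n)" by (simp add: algebra_simps)
        have "indicator {0..} y * y powr (a - 1) * exp (- ((1 + t\<^sup>2 / n) * y))
            = (y powr (a - 1) * exp (- y)) * exp (- (y * t\<^sup>2 / n))"
          using True unfolding e exp_add by (simp add: indicator_def)
        thus "ennreal (indicator {0..} y * y powr (a - 1) * exp (- ((1 + t\<^sup>2 / n) * y)))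
            = ennreal (y powr (a - 1) * exp (- y)) * ennreal (exp (- (y * t\<^sup>2 / n)))"
          by (simp only: ennreal_mult[symmetric] mult_nonneg_nonneg powr_ge_zero exp_ge_zero)
      qed
      also have "\<dots> = ennreal (y powr (a - 1) * exp (- y)) * (\<integral>\<^sup>+t. ennreal (exp (- (y * t\<^sup>2 / n))) \<partial>lborel)"
        by (rule nn_integral_cmult) auto
      also have "\<dots> = ennreal (y powr (a - 1) * exp (- y) * sqrt (pi * n / y))"
        using gauss_scaled_nn[OF True n] True n
        by (subst ennreal_mult[of "y powr (a - 1) * exp (- y)"]) auto
      also have "y powr (a - 1) * exp (- y) * sqrt (pi * n / y) = sqrt (pi * n) * (y powr (n / 2 - 1) / exp y)"
      proof -
        have "y powr (- (1 / 2)) = inverse (sqrt y)"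
          using True by (simp only: powr_minus powr_half_sqrt less_imp_le)
        moreover have "sqrt (pi * n / y) = sqrt (pi * n) * inverse (sqrt y)"
          by (simp add: real_sqrt_mult real_sqrt_inverse divide_inverse)
        ultimately have S: "sqrt (pi * n / y) = sqrt (pi * n) * y powr (- (1 / 2))"
          by simp
        have P: "y powr (a - 1) * y powr (- (1 / 2)) = y powr (n / 2 - 1)"
        proof -
          have "a - 1 + - (1 / 2) = n / 2 - 1" unfolding a_def by (simp add: field_simps)
          thus ?thesis by (simp only: powr_add[symmetric])
        qed
        have "y powr (a - 1) * exp (- y) * sqrt (pi * n / y)
            = sqrt (pi * n) * (y powr (a - 1) * y powr (- (1 / 2))) * exp (- y)"
          unfolding S by (simp only: mult_ac)
        also have "\<dots> = sqrt (pi * n) * (y powr (n / 2 - 1) / exp y)"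
          unfolding P by (simp only: exp_minus divide_inverse mult.assoc)
        finally show ?thesis .
      qed
      finally show ?thesis using True n by (subst ennreal_mult[symmetric]) (auto simp: indicator_def)
    next
      case False
      then show ?thesis by (cases "y = 0") (auto simp: indicator_def)
    qed
  qed
  also have "\<dots> = ennreal (sqrt (pi * n)) * ennreal (Gamma (n / 2))"
    using n by (simp add: nn_integral_cmult Gamma_conv_nn_integral_real)
  finally have eq: "ennreal (Gamma a) * (\<integral>\<^sup>+t. ennreal ((1 + t\<^sup>2 / n) powr (- a)) \<partial>lborel)
      = ennreal (sqrt (pi * n) * Gamma (n / 2))"
    using n by (subst ennreal_mult) (auto simp: Gamma_real_pos less_imp_le)
  have "(\<integral>\<^sup>+t. ennreal ((1 + t\<^sup>2 / n) powr (- a)) \<partial>lborel)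
     = ennreal (1 / Gamma a) * (ennreal (Gamma a) * (\<integral>\<^sup>+t. ennreal ((1 + t\<^sup>2 / n) powr (- a)) \<partial>lborel))"
  proof -
    have "ennreal (1 / Gamma a) * ennreal (Gamma a) = 1"
      using Ga by (subst ennreal_mult[symmetric]) auto
    thus ?thesis unfolding mult.assoc[symmetric] by simp
  qed
  also have "\<dots> = ennreal (sqrt (pi * n) * Gamma (n / 2) / Gamma a)"
    unfolding eq using Ga n by (subst ennreal_mult[symmetric]) (auto simp: Gamma_real_pos less_imp_le)
  finally show ?thesis unfolding a_def minus_divide_left .
qed

definition C0 :: "nat \<Rightarrow> real" where
  "C0 \<nu> = Gamma ((real \<nu> + 1) / 2) / (sqrt (real \<nu> * pi) * Gamma (real \<nu> / 2))"

lemma pdf_eq: "student_t_pdf \<nu> t = C0 \<nu> * (1 + t\<^sup>2 / real \<nu>) powr (- ((real \<nu> + 1) / 2))"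
  unfolding student_t_pdf_def C0_def by (simp add: minus_divide_left)

lemma pdf_measurable[measurable]: "student_t_pdf \<nu> \<in> borel_measurable borel"
  unfolding pdf_eq[abs_def] by measurable

lemma base_pos: "1 + t\<^sup>2 / real \<nu> > 0"
proof -
  have "0 \<le> t\<^sup>2 / real \<nu>" by simp
  thus ?thesis by linarith
qed

lemma pdf_even: "student_t_pdf \<nu> (- t) = student_t_pdf \<nu> t"
  unfolding pdf_eq by simp

context
  fixes \<nu> :: nat
  assumes nu: "1 \<le> \<nu>"
begin

lemma n_pos: "real \<nu> > 0" using nu by simp

lemma pdf_cont: "continuous_on UNIV (student_t_pdf \<nu>)"
  unfolding pdf_eq[abs_def]
  using base_pos n_pos by (intro continuous_intros) (auto simp: less_imp_neq[symmetric])

lemma C0_pos: "C0 \<nu> > 0"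
  unfolding C0_def using n_pos by (auto intro!: divide_pos_pos mult_pos_pos Gamma_real_pos)

lemma pdf_pos: "student_t_pdf \<nu> t > 0"
  unfolding pdf_eq using C0_pos base_pos[of t \<nu>] by (auto intro!: mult_pos_pos)

lemma pdf_le: "student_t_pdf \<nu> t \<le> C0 \<nu>"
proof -
  have b: "1 \<le> 1 + t\<^sup>2 / real \<nu>" using n_pos by simp
  have "(1 + t\<^sup>2 / real \<nu>) powr (- ((real \<nu> + 1) / 2)) \<le> 1"
    using b n_pos by (subst powr_minus) (auto intro!: ge_one_powr_ge_zero simp: inverse_le_1_iff)
  thus ?thesis unfolding pdf_eq using C0_pos by (simp add: mult_left_le)
qed

lemma pdf_nn: "(\<integral>\<^sup>+t. ennreal (student_t_pdf \<nu> t) \<partial>lborel) = 1"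
proof -
  have "(\<integral>\<^sup>+t. ennreal (student_t_pdf \<nu> t) \<partial>lborel) =
     (\<integral>\<^sup>+t. ennreal (C0 \<nu>) * ennreal ((1 + t\<^sup>2 / real \<nu>) powr (- (real \<nu> + 1) / 2)) \<partial>lborel)"
    unfolding pdf_eq using C0_pos
    by (intro nn_integral_cong) (simp add: ennreal_mult minus_divide_left)
  also have "\<dots> = ennreal (C0 \<nu>) * ennreal (sqrt (pi * real \<nu>) * Gamma (real \<nu> / 2) / Gamma ((real \<nu> + 1) / 2))"
    using student_kernel_nn[OF n_pos] by (subst nn_integral_cmult) simp_all
  also have "\<dots> = ennreal 1"
  proof (subst ennreal_mult[symmetric])
    show "0 \<le> C0 \<nu>" using C0_pos by simp
    show "0 \<le> sqrt (pi * real \<nu>) * Gamma (real \<nu> / 2) / Gamma ((real \<nu> + 1) / 2)"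
      using n_pos by (auto intro!: divide_nonneg_pos mult_nonneg_nonneg less_imp_le Gamma_real_pos)
    define A where "A = Gamma ((real \<nu> + 1) / 2)"
    define B where "B = sqrt (pi * real \<nu>) * Gamma (real \<nu> / 2)"
    have "A > 0" unfolding A_def using n_pos by (auto intro!: Gamma_real_pos)
    moreover have "B > 0" unfolding B_def using n_pos by (auto intro!: Gamma_real_pos)
    moreover have "C0 \<nu> = A / B" unfolding C0_def A_def B_def by (simp add: mult.commute)
    ultimately show "ennreal (C0 \<nu> * (sqrt (pi * real \<nu>) * Gamma (real \<nu> / 2) / Gamma ((real \<nu> + 1) / 2))) = ennreal 1"
      unfolding B_def[symmetric] A_def[symmetric] by simp
  qed
  finally show ?thesis by simp
qed

lemma pdf_integrable: "integrable lborel (student_t_pdf \<nu>)"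
  using pdf_nn pdf_pos by (intro integrableI_nonneg) (auto intro: less_imp_le)

lemma pdf_integral: "(LINT t|lborel. student_t_pdf \<nu> t) = 1"
proof -
  have "ennreal (LINT t|lborel. student_t_pdf \<nu> t) = 1"
    using pdf_nn pdf_integrable pdf_pos
    by (subst nn_integral_eq_integral[symmetric]) (auto intro: less_imp_le)
  thus ?thesis by simp
qed

lemma pdf_upper:
  assumes t: "t > 0"
  shows "student_t_pdf \<nu> t \<le> C0 \<nu> * real \<nu> powr ((real \<nu> + 1) / 2) * t powr (- (real \<nu> + 1))"
proof -
  define a where "a = (real \<nu> + 1) / 2"
  have "(1 + t\<^sup>2 / real \<nu>) powr (- a) \<le> (t\<^sup>2 / real \<nu>) powr (- a)"
    using t n_pos unfolding a_def by (intro powr_mono2') auto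
  also have "(t\<^sup>2 / real \<nu>) powr (- a) = real \<nu> powr a * t powr (- (real \<nu> + 1))"
  proof -
    have "(t\<^sup>2) powr (- a) = t powr (- (real \<nu> + 1))"
    proof -
      have "t\<^sup>2 = t powr 2" using t by simp
      hence "(t\<^sup>2) powr (- a) = t powr (2 * - a)" by (simp add: powr_powr)
      also have "2 * - a = - (real \<nu> + 1)" unfolding a_def by (simp add: field_simps)
      finally show ?thesis .
    qed
    have "(t\<^sup>2 / real \<nu>) powr (- a) = (t\<^sup>2) powr (- a) / real \<nu> powr (- a)"
      by (rule powr_divide)
    also have "\<dots> = t powr (- (real \<nu> + 1)) / inverse (real \<nu> powr a)"
      unfolding \<open>(t\<^sup>2) powr (- a) = t powr (- (real \<nu> + 1))\<close> powr_minus[of "real \<nu>" a] ..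
    finally show ?thesis by (simp add: divide_inverse mult.commute)
  qed
  finally show ?thesis unfolding pdf_eq a_def[symmetric] using C0_pos
    by (simp add: mult_left_mono mult.assoc)
qed

lemma pdf_lower:
  assumes x: "x > 0" and xt: "x \<le> t"
  shows "student_t_pdf \<nu> t \<ge> C0 \<nu> * (1 + real \<nu> / x\<^sup>2) powr (- ((real \<nu> + 1) / 2))
           * real \<nu> powr ((real \<nu> + 1) / 2) * t powr (- (real \<nu> + 1))"
proof -
  define a where "a = (real \<nu> + 1) / 2"
  have t: "t > 0" using x xt by simp
  have "1 + t\<^sup>2 / real \<nu> = (t\<^sup>2 / real \<nu>) * (1 + real \<nu> / t\<^sup>2)"
    using t n_pos by (simp add: field_simps)
  also have "\<dots> \<le> (t\<^sup>2 / real \<nu>) * (1 + real \<nu> / x\<^sup>2)"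
    using x xt n_pos by (intro mult_left_mono add_left_mono divide_left_mono) (auto intro: power_mono)
  finally have le: "1 + t\<^sup>2 / real \<nu> \<le> (t\<^sup>2 / real \<nu>) * (1 + real \<nu> / x\<^sup>2)" .
  have "((t\<^sup>2 / real \<nu>) * (1 + real \<nu> / x\<^sup>2)) powr (- a) \<le> (1 + t\<^sup>2 / real \<nu>) powr (- a)"
    using le t n_pos unfolding a_def by (intro powr_mono2') (auto simp: add_pos_nonneg)
  moreover have "((t\<^sup>2 / real \<nu>) * (1 + real \<nu> / x\<^sup>2)) powr (- a)
      = (1 + real \<nu> / x\<^sup>2) powr (- a) * (real \<nu> powr a * t powr (- (real \<nu> + 1)))"
  proof -
    have "(t\<^sup>2) powr (- a) = t powr (- (real \<nu> + 1))"
    proof -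
      have "t\<^sup>2 = t powr 2" using t by simp
      hence "(t\<^sup>2) powr (- a) = t powr (2 * - a)" by (simp add: powr_powr)
      also have "2 * - a = - (real \<nu> + 1)" unfolding a_def by (simp add: field_simps)
      finally show ?thesis .
    qed
    hence "(t\<^sup>2 / real \<nu>) powr (- a) = real \<nu> powr a * t powr (- (real \<nu> + 1))"
    proof -
      assume T: "(t\<^sup>2) powr (- a) = t powr (- (real \<nu> + 1))"
      have "(t\<^sup>2 / real \<nu>) powr (- a) = (t\<^sup>2) powr (- a) / real \<nu> powr (- a)"
        by (rule powr_divide)
      also have "\<dots> = t powr (- (real \<nu> + 1)) / inverse (real \<nu> powr a)"
        unfolding T powr_minus[of "real \<nu>" a] ..
      finally show ?thesis by (simp add: divide_inverse mult.commute)
    qed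
    moreover have "((t\<^sup>2 / real \<nu>) * (1 + real \<nu> / x\<^sup>2)) powr (- a)
       = (t\<^sup>2 / real \<nu>) powr (- a) * (1 + real \<nu> / x\<^sup>2) powr (- a)"
      by (rule powr_mult)
    ultimately show ?thesis by (simp only: mult.commute)
  qed
  ultimately show ?thesis unfolding pdf_eq a_def[symmetric] using C0_pos
    by (simp add: mult_left_mono mult.assoc)
qed

end

definition Gbar :: "nat \<Rightarrow> real \<Rightarrow> real" where
  "Gbar \<nu> x = (LBINT s:{x<..}. student_t_pdf \<nu> s)"

definition Kc :: "nat \<Rightarrow> real" where
  "Kc \<nu> = C0 \<nu> * real \<nu> powr ((real \<nu> + 1) / 2) / real \<nu>"

lemma Gbar_eq: "Gbar \<nu> x = (LINT s|lborel. indicator {x<..} s * student_t_pdf \<nu> s)"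
  unfolding Gbar_def set_lebesgue_integral_def by simp

lemma cdf_eq: "student_t_cdf \<nu> x = (LINT s|lborel. indicator {..x} s * student_t_pdf \<nu> s)"
  unfolding student_t_cdf_def set_lebesgue_integral_def by simp

lemma powr_tail_nn:
  fixes x e :: real
  assumes "x > 0" "e < -1"
  shows "(\<integral>\<^sup>+s. ennreal (indicator {x..} s * s powr e) \<partial>lborel) = ennreal (- (x powr (e + 1)) / (e + 1))"
  using nn_integral_has_integral_lebesgue[OF _ has_integral_powr_to_inf[OF assms(2,1)]] by simp

lemma nn_Ioi_Ici:
  fixes x :: real and f :: "real \<Rightarrow> real"
  shows   "(\<integral>\<^sup>+s. ennreal (indicator {x<..} s * f s) \<partial>lborel) = (\<integral>\<^sup>+s. ennreal (indicator {x..} s * f s) \<partial>lborel)"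
proof (intro nn_integral_cong_AE eventually_mono[OF AE_lborel_singleton[of x]])
  fix s :: real assume "s \<noteq> x"
  thus "ennreal (indicator {x<..} s * f s) = ennreal (indicator {x..} s * f s)"
    by (cases "x < s") (auto simp: indicator_def)
qed

context
  fixes \<nu> :: nat
  assumes nu: "1 \<le> \<nu>"
begin

lemma Kc_pos: "Kc \<nu> > 0"
  unfolding Kc_def using C0_pos[OF nu] n_pos[OF nu] by simp

lemma pdf_ind_integrable: "A \<in> sets borel \<Longrightarrow> integrable lborel (\<lambda>s. indicator A s * student_t_pdf \<nu> s)"
  using integrable_mult_indicator[OF _ pdf_integrable[OF nu], of A] by simp

lemma pdf_ind_nonneg: "0 \<le> indicator A s * student_t_pdf \<nu> s"
  using pdf_pos[OF nu, of s] by simp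

lemma Gbar_nn: "ennreal (Gbar \<nu> x) = (\<integral>\<^sup>+s. ennreal (indicator {x<..} s * student_t_pdf \<nu> s) \<partial>lborel)"
  unfolding Gbar_eq
  by (subst nn_integral_eq_integral) (auto intro!: pdf_ind_integrable AE_I2 pdf_ind_nonneg)

lemma Gbar_nonneg: "Gbar \<nu> x \<ge> 0"
  unfolding Gbar_eq by (auto intro!: integral_nonneg_AE AE_I2 pdf_ind_nonneg)

lemma Gbar_plus_cdf: "Gbar \<nu> x + student_t_cdf \<nu> x = 1"
proof -
  have "Gbar \<nu> x + student_t_cdf \<nu> x = (LINT s|lborel. indicator {x<..} s * student_t_pdf \<nu> s + indicator {..x} s * student_t_pdf \<nu> s)"
    unfolding Gbar_eq cdf_eq by (rule Bochner_Integration.integral_add[symmetric]) (auto intro!: pdf_ind_integrable)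
  also have "\<dots> = (LINT s|lborel. student_t_pdf \<nu> s)"
    by (intro Bochner_Integration.integral_cong) (auto simp: indicator_def)
  finally show ?thesis using pdf_integral[OF nu] by simp
qed

lemma Gbar_le1: "Gbar \<nu> x \<le> 1"
proof -
  have "student_t_cdf \<nu> x \<ge> 0"
    unfolding cdf_eq by (auto intro!: integral_nonneg_AE AE_I2 pdf_ind_nonneg)
  thus ?thesis using Gbar_plus_cdf[of x] by linarith
qed

lemma Gbar_minus: "Gbar \<nu> (- x) = 1 - Gbar \<nu> x"
proof -
  have "Gbar \<nu> (- x) = (LINT s|lborel. indicator {- x<..} (- s) * student_t_pdf \<nu> (- s))"
    unfolding Gbar_eq
    by (subst lborel_integral_real_affine[where c="-1" and t=0]) auto
  also have "\<dots> = (LINT s|lborel. indicator {..x} s * student_t_pdf \<nu> s)"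
    by (intro integral_cong_AE eventually_mono[OF AE_lborel_singleton[of x]])
       (auto simp: indicator_def pdf_even)
  finally show ?thesis using Gbar_plus_cdf[of x] unfolding cdf_eq by linarith
qed

lemma Gbar_diff:
  assumes "x \<le> y"
  shows "Gbar \<nu> x - Gbar \<nu> y = (LINT s|lborel. indicator {x<..y} s * student_t_pdf \<nu> s)"
proof -
  have "Gbar \<nu> x - Gbar \<nu> y = (LINT s|lborel. indicator {x<..} s * student_t_pdf \<nu> s - indicator {y<..} s * student_t_pdf \<nu> s)"
    unfolding Gbar_eq by (rule Bochner_Integration.integral_diff[symmetric]) (auto intro!: pdf_ind_integrable)
  also have "\<dots> = (LINT s|lborel. indicator {x<..y} s * student_t_pdf \<nu> s)"
    using assms by (intro Bochner_Integration.integral_cong) (auto simp: indicator_def)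
  finally show ?thesis .
qed

lemma Gbar_lipschitz:
  assumes "x \<le> y"
  shows "Gbar \<nu> x - Gbar \<nu> y \<le> C0 \<nu> * (y - x)"
proof -
  have "(LINT s|lborel. indicator {x<..y} s * student_t_pdf \<nu> s) \<le> (LINT s|lborel. indicator {x<..y} s * C0 \<nu>)"
  proof (rule integral_mono)
    show "integrable lborel (\<lambda>s. indicator {x<..y} s * student_t_pdf \<nu> s)"
      by (rule pdf_ind_integrable) simp
    show "integrable lborel (\<lambda>s. indicator {x<..y} s * C0 \<nu>)"
      using assms by (intro integrable_mult_left integrable_real_indicator) auto
    show "indicator {x<..y} s * student_t_pdf \<nu> s \<le> indicator {x<..y} s * C0 \<nu>" for s
      using pdf_le[OF nu, of s] by (simp add: indicator_def)
  qed
  also have "\<dots> = C0 \<nu> * (y - x)"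
    using assms by simp
  finally show ?thesis using Gbar_diff[OF assms] by simp
qed

lemma Gbar_strict_mono:
  assumes "x < y"
  shows "Gbar \<nu> y < Gbar \<nu> x"
proof -
  define M where "M = max \<bar>x\<bar> \<bar>y\<bar>"
  define m where "m = C0 \<nu> * (1 + M\<^sup>2 / real \<nu>) powr (- ((real \<nu> + 1) / 2))"
  have mpos: "m > 0" unfolding m_def using C0_pos[OF nu] base_pos[of M \<nu>] by simp
  have mle: "m \<le> student_t_pdf \<nu> s" if "s \<in> {x<..y}" for s
  proof -
    have "s\<^sup>2 \<le> M\<^sup>2" using that unfolding M_def by (auto intro!: power_mono simp: abs_le_square_iff[symmetric])
    hence "1 + s\<^sup>2 / real \<nu> \<le> 1 + M\<^sup>2 / real \<nu>" using n_pos[OF nu] by (simp add: divide_right_mono)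
    hence "(1 + M\<^sup>2 / real \<nu>) powr (- ((real \<nu> + 1) / 2)) \<le> (1 + s\<^sup>2 / real \<nu>) powr (- ((real \<nu> + 1) / 2))"
      using base_pos[of s \<nu>] by (intro powr_mono2') auto
    thus ?thesis unfolding m_def pdf_eq using C0_pos[OF nu] by simp
  qed
  have "m * (y - x) = (LINT s|lborel. indicator {x<..y} s * m)"
    using assms by simp
  also have "\<dots> \<le> (LINT s|lborel. indicator {x<..y} s * student_t_pdf \<nu> s)"
  proof (rule integral_mono)
    show "integrable lborel (\<lambda>s. indicator {x<..y} s * student_t_pdf \<nu> s)"
      by (rule pdf_ind_integrable) simp
    show "integrable lborel (\<lambda>s. indicator {x<..y} s * m)"
      using assms by (intro integrable_mult_left integrable_real_indicator) auto
    show "indicator {x<..y} s * m \<le> indicator {x<..y} s * student_t_pdf \<nu> s" for s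
      using mle[of s] by (simp add: indicator_def)
  qed
  finally have "m * (y - x) \<le> Gbar \<nu> x - Gbar \<nu> y" using Gbar_diff[of x y] assms by simp
  moreover have "m * (y - x) > 0" using mpos assms by simp
  ultimately show ?thesis by linarith
qed

lemma Gbar_mono: "x \<le> y \<Longrightarrow> Gbar \<nu> y \<le> Gbar \<nu> x"
  using Gbar_strict_mono by (cases "x = y") (auto intro: less_imp_le)

lemma Gbar_cont: "continuous_on UNIV (Gbar \<nu>)"
proof (rule continuous_onI)
  fix x :: real and e :: real assume e: "e > 0"
  define d where "d = e / C0 \<nu>"
  have d: "d > 0" unfolding d_def using e C0_pos[OF nu] by simp
  show "\<exists>d>0. \<forall>x'\<in>UNIV. dist x' x < d \<longrightarrow> dist (Gbar \<nu> x') (Gbar \<nu> x) \<le> e"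
  proof (intro exI[of _ d] conjI ballI impI d)
    fix x' assume "dist x' x < d"
    hence "\<bar>x' - x\<bar> < d" by (simp add: dist_real_def)
    moreover have "\<bar>Gbar \<nu> x' - Gbar \<nu> x\<bar> \<le> C0 \<nu> * \<bar>x' - x\<bar>"
    proof (cases "x \<le> x'")
      case True
      thus ?thesis using Gbar_lipschitz[OF True] Gbar_mono[OF True] by simp
    next
      case False
      hence xx: "x' \<le> x" by simp
      have "\<bar>x' - x\<bar> = x - x'" using xx by simp
      thus ?thesis using Gbar_lipschitz[OF xx] Gbar_mono[OF xx] by simp
    qed
    ultimately have "\<bar>Gbar \<nu> x' - Gbar \<nu> x\<bar> \<le> C0 \<nu> * d"
      using C0_pos[OF nu] by (smt (verit) mult_left_mono)
    thus "dist (Gbar \<nu> x') (Gbar \<nu> x) \<le> e"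
      unfolding d_def dist_real_def using C0_pos[OF nu] by simp
  qed
qed

lemma Gbar_measurable[measurable]: "Gbar \<nu> \<in> borel_measurable borel"
  using Gbar_cont by (rule borel_measurable_continuous_onI)

lemma Gbar_pos: "Gbar \<nu> x > 0"
  using Gbar_strict_mono[of x "x + 1"] Gbar_nonneg[of "x + 1"] by simp

lemma Gbar_upper:
  assumes x: "x > 0"
  shows "Gbar \<nu> x \<le> Kc \<nu> * x powr (- real \<nu>)"
proof -
  define A where "A = C0 \<nu> * real \<nu> powr ((real \<nu> + 1) / 2)"
  have "ennreal (Gbar \<nu> x) = (\<integral>\<^sup>+s. ennreal (indicator {x..} s * student_t_pdf \<nu> s) \<partial>lborel)"
    unfolding Gbar_nn nn_Ioi_Ici ..
  also have "\<dots> \<le> (\<integral>\<^sup>+s. ennreal A * ennreal (indicator {x..} s * s powr (- (real \<nu> + 1))) \<partial>lborel)"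
  proof (intro nn_integral_mono)
    fix s :: real
    show "ennreal (indicator {x..} s * student_t_pdf \<nu> s) \<le> ennreal A * ennreal (indicator {x..} s * s powr (- (real \<nu> + 1)))"
    proof (cases "s \<ge> x")
      case True
      hence "student_t_pdf \<nu> s \<le> A * s powr (- (real \<nu> + 1))"
        unfolding A_def using pdf_upper[OF nu, of s] x by simp
      moreover have "A \<ge> 0" unfolding A_def using C0_pos[OF nu] by simp
      ultimately show ?thesis using True by (simp add: ennreal_mult[symmetric])
    qed simp
  qed
  also have "\<dots> = ennreal A * ennreal (- (x powr (- (real \<nu> + 1) + 1)) / (- (real \<nu> + 1) + 1))"
    using powr_tail_nn[OF x, of "- (real \<nu> + 1)"] n_pos[OF nu] by (subst nn_integral_cmult) auto
  also have "\<dots> = ennreal (Kc \<nu> * x powr (- real \<nu>))"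
    unfolding Kc_def A_def using C0_pos[OF nu] n_pos[OF nu]
    by (subst ennreal_mult[symmetric]) (auto simp: field_simps)
  finally show ?thesis using Kc_pos x by (simp add: ennreal_le_iff)
qed

lemma Gbar_lower:
  assumes x: "x > 0"
  shows "Gbar \<nu> x \<ge> Kc \<nu> * (1 + real \<nu> / x\<^sup>2) powr (- ((real \<nu> + 1) / 2)) * x powr (- real \<nu>)"
proof -
  define A where "A = C0 \<nu> * (1 + real \<nu> / x\<^sup>2) powr (- ((real \<nu> + 1) / 2)) * real \<nu> powr ((real \<nu> + 1) / 2)"
  have A: "A \<ge> 0" unfolding A_def using C0_pos[OF nu] by simp
  have "ennreal (A * (- (x powr (- (real \<nu> + 1) + 1)) / (- (real \<nu> + 1) + 1)))
      = ennreal A * ennreal (- (x powr (- (real \<nu> + 1) + 1)) / (- (real \<nu> + 1) + 1))"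
    using A n_pos[OF nu] by (subst ennreal_mult) auto
  also have "\<dots> = (\<integral>\<^sup>+s. ennreal A * ennreal (indicator {x..} s * s powr (- (real \<nu> + 1))) \<partial>lborel)"
    using powr_tail_nn[OF x, of "- (real \<nu> + 1)"] n_pos[OF nu] by (subst nn_integral_cmult) auto
  also have "\<dots> \<le> (\<integral>\<^sup>+s. ennreal (indicator {x..} s * student_t_pdf \<nu> s) \<partial>lborel)"
  proof (intro nn_integral_mono)
    fix s :: real
    show "ennreal A * ennreal (indicator {x..} s * s powr (- (real \<nu> + 1))) \<le> ennreal (indicator {x..} s * student_t_pdf \<nu> s)"
    proof (cases "s \<ge> x")
      case True
      hence "A * s powr (- (real \<nu> + 1)) \<le> student_t_pdf \<nu> s"
        unfolding A_def using pdf_lower[OF nu x True] by simp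
      thus ?thesis using True A by (simp add: ennreal_mult[symmetric] ennreal_leI)
    qed simp
  qed
  also have "\<dots> = ennreal (Gbar \<nu> x)"
    unfolding Gbar_nn nn_Ioi_Ici ..
  finally have "A * (- (x powr (- (real \<nu> + 1) + 1)) / (- (real \<nu> + 1) + 1)) \<le> Gbar \<nu> x"
    using Gbar_nonneg by (simp add: ennreal_le_iff)
  moreover have "A * (- (x powr (- (real \<nu> + 1) + 1)) / (- (real \<nu> + 1) + 1))
     = Kc \<nu> * (1 + real \<nu> / x\<^sup>2) powr (- ((real \<nu> + 1) / 2)) * x powr (- real \<nu>)"
    unfolding A_def Kc_def using n_pos[OF nu] by (simp add: field_simps)
  ultimately show ?thesis by simp
qed

end

definition Itail :: "nat \<Rightarrow> real \<Rightarrow> real" where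
  "Itail \<nu> h = (LINT t|lborel. Gbar \<nu> (h - t) * student_t_pdf \<nu> t)"

context
  fixes \<nu> :: nat
  assumes nu: "1 \<le> \<nu>"
begin

lemmas Gbar_meas[measurable] = Gbar_measurable[OF nu]

lemma Gbar_lim: "((\<lambda>x. Gbar \<nu> x * x powr real \<nu>) \<longlongrightarrow> Kc \<nu>) at_top"
proof (rule tendsto_sandwich)
  define a where "a = (real \<nu> + 1) / 2"
  have "((\<lambda>x. (1 + real \<nu> / x\<^sup>2) powr (- a)) \<longlongrightarrow> 1) at_top"
    using n_pos[OF nu] by real_asymp
  from tendsto_mult[OF tendsto_const[of "Kc \<nu>"] this]
  show "((\<lambda>x. Kc \<nu> * (1 + real \<nu> / x\<^sup>2) powr (- a)) \<longlongrightarrow> Kc \<nu>) at_top" by simp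
  show "((\<lambda>x. Kc \<nu>) \<longlongrightarrow> Kc \<nu>) at_top" by simp
  show "\<forall>\<^sub>F x in at_top. Kc \<nu> * (1 + real \<nu> / x\<^sup>2) powr (- a) \<le> Gbar \<nu> x * x powr real \<nu>"
  proof (intro eventually_mono[OF eventually_gt_at_top[of 0]])
    fix x :: real assume x: "x > 0"
    have "Kc \<nu> * (1 + real \<nu> / x\<^sup>2) powr (- a) = Kc \<nu> * (1 + real \<nu> / x\<^sup>2) powr (- a) * x powr (- real \<nu>) * x powr real \<nu>"
      using x by (simp add: powr_minus field_simps)
    also have "\<dots> \<le> Gbar \<nu> x * x powr real \<nu>"
      using Gbar_lower[OF nu x] unfolding a_def by (intro mult_right_mono) auto
    finally show "Kc \<nu> * (1 + real \<nu> / x\<^sup>2) powr (- a) \<le> Gbar \<nu> x * x powr real \<nu>" .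
  qed
  show "\<forall>\<^sub>F x in at_top. Gbar \<nu> x * x powr real \<nu> \<le> Kc \<nu>"
  proof (intro eventually_mono[OF eventually_gt_at_top[of 0]])
    fix x :: real assume x: "x > 0"
    have "Gbar \<nu> x * x powr real \<nu> \<le> Kc \<nu> * x powr (- real \<nu>) * x powr real \<nu>"
      using Gbar_upper[OF nu x] by (intro mult_right_mono) auto
    also have "\<dots> = Kc \<nu>" using x by (simp add: powr_minus field_simps)
    finally show "Gbar \<nu> x * x powr real \<nu> \<le> Kc \<nu>" .
  qed
qed

lemma Gbar_integrand_integrable:
  "integrable lborel (\<lambda>t. Gbar \<nu> (h - t) * student_t_pdf \<nu> t)"
proof (rule Bochner_Integration.integrable_bound[OF pdf_integrable[OF nu]])
  show "(\<lambda>t. Gbar \<nu> (h - t) * student_t_pdf \<nu> t) \<in> borel_measurable lborel"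
    unfolding measurable_lborel2 by measurable
  show "AE t in lborel. norm (Gbar \<nu> (h - t) * student_t_pdf \<nu> t) \<le> norm (student_t_pdf \<nu> t)"
  proof (intro AE_I2)
    fix t
    have "0 \<le> Gbar \<nu> (h - t)" "Gbar \<nu> (h - t) \<le> 1" "0 < student_t_pdf \<nu> t"
      using Gbar_nonneg[OF nu] Gbar_le1[OF nu] pdf_pos[OF nu] by auto
    thus "norm (Gbar \<nu> (h - t) * student_t_pdf \<nu> t) \<le> norm (student_t_pdf \<nu> t)"
      using mult_left_le_one_le[of "student_t_pdf \<nu> t" "Gbar \<nu> (h - t)"] by (simp add: abs_mult)
  qed
qed

lemma Itail_reflect:
  "Itail \<nu> h = (LINT t|lborel. Gbar \<nu> (t + h) * student_t_pdf \<nu> t)"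
  unfolding Itail_def
  by (subst lborel_integral_real_affine[where c="-1" and t=0]) (auto simp: pdf_even)

lemma F_eq: "(LINT t|lborel. student_t_cdf \<nu> (t + h) * student_t_pdf \<nu> t) = 1 - Itail \<nu> h"
proof -
  have "(LINT t|lborel. student_t_cdf \<nu> (t + h) * student_t_pdf \<nu> t)
     = (LINT t|lborel. student_t_pdf \<nu> t - Gbar \<nu> (t + h) * student_t_pdf \<nu> t)"
  proof (intro Bochner_Integration.integral_cong refl)
    fix t
    have "student_t_cdf \<nu> (t + h) = 1 - Gbar \<nu> (t + h)" using Gbar_plus_cdf[OF nu, of "t + h"] by simp
    thus "student_t_cdf \<nu> (t + h) * student_t_pdf \<nu> t = student_t_pdf \<nu> t - Gbar \<nu> (t + h) * student_t_pdf \<nu> t"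
      by (simp only: left_diff_distrib mult_1_left)
  qed
  also have "\<dots> = 1 - Itail \<nu> h"
  proof -
    have "integrable lborel (\<lambda>t. Gbar \<nu> (t + h) * student_t_pdf \<nu> t)"
    proof -
      have "integrable lborel (\<lambda>x. Gbar \<nu> (0 + -1 * x + h) * student_t_pdf \<nu> (0 + -1 * x))"
        using Gbar_integrand_integrable[of h] by (simp add: pdf_even)
      with lborel_integrable_real_affine_iff[of "-1" "\<lambda>t. Gbar \<nu> (t + h) * student_t_pdf \<nu> t" 0]
      show ?thesis by simp
    qed
    thus ?thesis
      unfolding Itail_reflect using pdf_integral[OF nu] pdf_integrable[OF nu]
      by (subst Bochner_Integration.integral_diff) auto
  qed
  finally show ?thesis .
qed

end

lemma integral_pos_lborel:
  fixes f :: "real \<Rightarrow> real"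
  assumes I: "integrable lborel f" and pos: "\<And>x. f x > 0"
  shows "integral\<^sup>L lborel f > 0"
proof -
  have nn: "AE x in lborel. 0 \<le> f x" using pos by (intro AE_I2) (simp add: less_imp_le)
  have ge: "integral\<^sup>L lborel f \<ge> 0" using nn by (rule integral_nonneg_AE)
  have "integral\<^sup>L lborel f \<noteq> 0"
  proof
    assume "integral\<^sup>L lborel f = 0"
    hence "AE x in lborel. f x = 0" using integral_nonneg_eq_0_iff_AE[OF I nn] by simp
    hence "AE x::real in lborel. False"
    proof (rule AE_mp)
      show "AE x in lborel. f x = 0 \<longrightarrow> False"
      proof (rule AE_I2)
        fix x show "f x = 0 \<longrightarrow> False" using pos[of x] by simp
      qed
    qed
    hence "ae_filter (lborel :: real measure) = bot" unfolding trivial_limit_def[symmetric] .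
    thus False using ae_filter_eq_bot_iff[of "lborel :: real measure"] by simp
  qed
  with ge show ?thesis by simp
qed

context
  fixes \<nu> :: nat
  assumes nu: "1 \<le> \<nu>"
begin

lemmas Gbar_meas'[measurable] = Gbar_measurable[OF nu]

lemma Itail_minus: "Itail \<nu> (- h) = 1 - Itail \<nu> h"
proof -
  have "1 - Itail \<nu> h = (LINT t|lborel. student_t_pdf \<nu> t - Gbar \<nu> (h - t) * student_t_pdf \<nu> t)"
    unfolding Itail_def using pdf_integral[OF nu]
    by (subst Bochner_Integration.integral_diff) (auto intro!: pdf_integrable[OF nu] Gbar_integrand_integrable[OF nu])
  also have "\<dots> = (LINT t|lborel. Gbar \<nu> (t + - h) * student_t_pdf \<nu> t)"
  proof (intro Bochner_Integration.integral_cong refl)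
    fix t
    have "Gbar \<nu> (t + - h) = 1 - Gbar \<nu> (h - t)" using Gbar_minus[OF nu, of "h - t"] by simp
    thus "student_t_pdf \<nu> t - Gbar \<nu> (h - t) * student_t_pdf \<nu> t = Gbar \<nu> (t + - h) * student_t_pdf \<nu> t"
      by (simp only: left_diff_distrib mult_1_left)
  qed
  also have "\<dots> = Itail \<nu> (- h)" by (rule Itail_reflect[OF nu, symmetric])
  finally show ?thesis by simp
qed

lemma Itail_half: "Itail \<nu> 0 = 1 / 2"
  using Itail_minus[of 0] by simp

lemma Itail_diff: "Itail \<nu> h - Itail \<nu> h' = (LINT t|lborel. (Gbar \<nu> (h - t) - Gbar \<nu> (h' - t)) * student_t_pdf \<nu> t)"
  unfolding Itail_def
  by (subst Bochner_Integration.integral_diff[symmetric]) (auto intro!: Gbar_integrand_integrable[OF nu] simp: left_diff_distrib)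

lemma Itail_diff_integrable: "integrable lborel (\<lambda>t. (Gbar \<nu> (h - t) - Gbar \<nu> (h' - t)) * student_t_pdf \<nu> t)"
  unfolding left_diff_distrib by (intro Bochner_Integration.integrable_diff Gbar_integrand_integrable[OF nu])

lemma Itail_strict_mono:
  assumes "h < h'"
  shows "Itail \<nu> h' < Itail \<nu> h"
proof -
  have "0 < (LINT t|lborel. (Gbar \<nu> (h - t) - Gbar \<nu> (h' - t)) * student_t_pdf \<nu> t)"
  proof (rule integral_pos_lborel[OF Itail_diff_integrable])
    fix t
    have "Gbar \<nu> (h' - t) < Gbar \<nu> (h - t)" using assms by (intro Gbar_strict_mono[OF nu]) simp
    thus "0 < (Gbar \<nu> (h - t) - Gbar \<nu> (h' - t)) * student_t_pdf \<nu> t"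
      using pdf_pos[OF nu, of t] by simp
  qed
  thus ?thesis using Itail_diff[of h h'] by simp
qed

lemma Itail_lipschitz:
  assumes "h \<le> h'"
  shows "Itail \<nu> h - Itail \<nu> h' \<le> C0 \<nu> * (h' - h)"
proof -
  have "(LINT t|lborel. (Gbar \<nu> (h - t) - Gbar \<nu> (h' - t)) * student_t_pdf \<nu> t)
      \<le> (LINT t|lborel. (C0 \<nu> * (h' - h)) * student_t_pdf \<nu> t)"
  proof (rule integral_mono[OF Itail_diff_integrable])
    show "integrable lborel (\<lambda>t. C0 \<nu> * (h' - h) * student_t_pdf \<nu> t)"
      by (intro integrable_mult_right pdf_integrable[OF nu])
    fix t
    have "Gbar \<nu> (h - t) - Gbar \<nu> (h' - t) \<le> C0 \<nu> * ((h' - t) - (h - t))"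
      using assms by (intro Gbar_lipschitz[OF nu]) simp
    thus "(Gbar \<nu> (h - t) - Gbar \<nu> (h' - t)) * student_t_pdf \<nu> t \<le> C0 \<nu> * (h' - h) * student_t_pdf \<nu> t"
      using pdf_pos[OF nu, of t] by (intro mult_right_mono) auto
  qed
  also have "\<dots> = C0 \<nu> * (h' - h)" using pdf_integral[OF nu] by simp
  finally show ?thesis using Itail_diff[of h h'] by simp
qed

lemma Itail_cont: "continuous_on UNIV (Itail \<nu>)"
proof (rule continuous_onI)
  fix x :: real and e :: real assume e: "e > 0"
  define d where "d = e / C0 \<nu>"
  have d: "d > 0" unfolding d_def using e C0_pos[OF nu] by simp
  show "\<exists>d>0. \<forall>x'\<in>UNIV. dist x' x < d \<longrightarrow> dist (Itail \<nu> x') (Itail \<nu> x) \<le> e"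
  proof (intro exI[of _ d] conjI ballI impI d)
    fix x' assume "dist x' x < d"
    hence "\<bar>x' - x\<bar> < d" by (simp add: dist_real_def)
    moreover have "\<bar>Itail \<nu> x' - Itail \<nu> x\<bar> \<le> C0 \<nu> * \<bar>x' - x\<bar>"
    proof (cases "x \<le> x'")
      case True
      have "Itail \<nu> x' \<le> Itail \<nu> x" using Itail_strict_mono[of x x'] True by (cases "x = x'") auto
      thus ?thesis using Itail_lipschitz[OF True] True by simp
    next
      case False
      hence xx: "x' \<le> x" by simp
      have "Itail \<nu> x \<le> Itail \<nu> x'" using Itail_strict_mono[of x' x] xx by (cases "x = x'") auto
      moreover have "\<bar>x' - x\<bar> = x - x'" using xx by simp
      ultimately show ?thesis using Itail_lipschitz[OF xx] by simp
    qed
    ultimately have "\<bar>Itail \<nu> x' - Itail \<nu> x\<bar> \<le> C0 \<nu> * d"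
      using C0_pos[OF nu] by (smt (verit) mult_left_mono)
    thus "dist (Itail \<nu> x') (Itail \<nu> x) \<le> e"
      unfolding d_def dist_real_def using C0_pos[OF nu] by simp
  qed
qed

end

lemma double_add:
  fixes f1 f2 :: "real \<Rightarrow> real \<Rightarrow> real"
  assumes [measurable]: "(\<lambda>(t,s). f1 s t) \<in> borel_measurable (lborel \<Otimes>\<^sub>M lborel)"
    "(\<lambda>(t,s). f2 s t) \<in> borel_measurable (lborel \<Otimes>\<^sub>M lborel)"
  and nn: "\<And>s t. f1 s t \<ge> 0" "\<And>s t. f2 s t \<ge> 0"
  shows "(\<integral>\<^sup>+t. \<integral>\<^sup>+s. ennreal (f1 s t + f2 s t) \<partial>lborel \<partial>lborel)
     = (\<integral>\<^sup>+t. \<integral>\<^sup>+s. ennreal (f1 s t) \<partial>lborel \<partial>lborel) + (\<integral>\<^sup>+t. \<integral>\<^sup>+s. ennreal (f2 s t) \<partial>lborel \<partial>lborel)"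
proof -
  have m1: "(\<lambda>s. f1 s t) \<in> borel_measurable lborel" for t
    using measurable_Pair2[OF assms(1), of t] by simp
  have m2: "(\<lambda>s. f2 s t) \<in> borel_measurable lborel" for t
    using measurable_Pair2[OF assms(2), of t] by simp
  have "(\<integral>\<^sup>+t. \<integral>\<^sup>+s. ennreal (f1 s t + f2 s t) \<partial>lborel \<partial>lborel)
     = (\<integral>\<^sup>+t. (\<integral>\<^sup>+s. ennreal (f1 s t) \<partial>lborel) + (\<integral>\<^sup>+s. ennreal (f2 s t) \<partial>lborel) \<partial>lborel)"
  proof (intro nn_integral_cong)
    fix t
    show "(\<integral>\<^sup>+s. ennreal (f1 s t + f2 s t) \<partial>lborel) = (\<integral>\<^sup>+s. ennreal (f1 s t) \<partial>lborel) + (\<integral>\<^sup>+s. ennreal (f2 s t) \<partial>lborel)"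
      using nn m1[of t] m2[of t] by (subst nn_integral_add[symmetric]) (auto simp: ennreal_plus)
  qed
  also have "\<dots> = (\<integral>\<^sup>+t. \<integral>\<^sup>+s. ennreal (f1 s t) \<partial>lborel \<partial>lborel) + (\<integral>\<^sup>+t. \<integral>\<^sup>+s. ennreal (f2 s t) \<partial>lborel \<partial>lborel)"
    by (rule nn_integral_add) measurable
  finally show ?thesis .
qed

lemma double_mono:
  fixes f1 f2 :: "real \<Rightarrow> real \<Rightarrow> real"
  assumes "\<And>s t. f1 s t \<le> f2 s t"
  shows "(\<integral>\<^sup>+t. \<integral>\<^sup>+s. ennreal (f1 s t) \<partial>lborel \<partial>lborel) \<le> (\<integral>\<^sup>+t. \<integral>\<^sup>+s. ennreal (f2 s t) \<partial>lborel \<partial>lborel)"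
  using assms by (intro nn_integral_mono ennreal_leI)

context
  fixes \<nu> :: nat
  assumes nu: "1 \<le> \<nu>"
begin

lemmas Gbar_meas''[measurable] = Gbar_measurable[OF nu]

lemma rep:
  assumes B[measurable]: "B \<in> sets borel"
  shows "(\<integral>\<^sup>+t. ennreal (indicator B t * Gbar \<nu> (h - t) * student_t_pdf \<nu> t) \<partial>lborel)
       = (\<integral>\<^sup>+t. \<integral>\<^sup>+s. ennreal (of_bool (h < s + t \<and> t \<in> B) * (student_t_pdf \<nu> s * student_t_pdf \<nu> t)) \<partial>lborel \<partial>lborel)"
proof (intro nn_integral_cong)
  fix t :: real
  have "ennreal (indicator B t * Gbar \<nu> (h - t) * student_t_pdf \<nu> t)
      = ennreal (Gbar \<nu> (h - t)) * ennreal (indicator B t * student_t_pdf \<nu> t)"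
    using Gbar_nonneg[OF nu, of "h - t"] pdf_pos[OF nu, of t]
    by (subst ennreal_mult[symmetric]) (auto simp: mult_ac)
  also have "\<dots> = (\<integral>\<^sup>+s. ennreal (indicator {h - t<..} s * student_t_pdf \<nu> s) * ennreal (indicator B t * student_t_pdf \<nu> t) \<partial>lborel)"
    unfolding Gbar_nn[OF nu] by (rule nn_integral_multc[symmetric]) simp
  also have "\<dots> = (\<integral>\<^sup>+s. ennreal (of_bool (h < s + t \<and> t \<in> B) * (student_t_pdf \<nu> s * student_t_pdf \<nu> t)) \<partial>lborel)"
  proof (intro nn_integral_cong)
    fix s :: real
    show "ennreal (indicator {h - t<..} s * student_t_pdf \<nu> s) * ennreal (indicator B t * student_t_pdf \<nu> t)
      = ennreal (of_bool (h < s + t \<and> t \<in> B) * (student_t_pdf \<nu> s * student_t_pdf \<nu> t))"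
      using pdf_pos[OF nu, of t] pdf_pos[OF nu, of s]
      by (subst ennreal_mult[symmetric]) (auto simp: indicator_def mult_ac)
  qed
  finally show "ennreal (indicator B t * Gbar \<nu> (h - t) * student_t_pdf \<nu> t)
      = (\<integral>\<^sup>+s. ennreal (of_bool (h < s + t \<and> t \<in> B) * (student_t_pdf \<nu> s * student_t_pdf \<nu> t)) \<partial>lborel)" .
qed

definition Jr :: "real \<Rightarrow> real" where
  "Jr h = (LINT t|lborel. indicator {..<h/2} t * Gbar \<nu> (h - t) * student_t_pdf \<nu> t)"

lemma Jr_integrand_integrable: "integrable lborel (\<lambda>t. indicator {..<h/2} t * Gbar \<nu> (h - t) * student_t_pdf \<nu> t)"
  using integrable_mult_indicator[OF _ Gbar_integrand_integrable[OF nu, of h], of "{..<h/2}"]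
  by (simp add: mult.assoc)

lemma Jr_nonneg: "Jr h \<ge> 0"
  unfolding Jr_def using Gbar_nonneg[OF nu] pdf_pos[OF nu]
  by (intro integral_nonneg_AE AE_I2) (simp add: less_imp_le)

lemma ennreal_Jr: "ennreal (Jr h) = (\<integral>\<^sup>+t. \<integral>\<^sup>+s. ennreal (of_bool (h < s + t \<and> t < h/2) * (student_t_pdf \<nu> s * student_t_pdf \<nu> t)) \<partial>lborel \<partial>lborel)"
proof -
  have "ennreal (Jr h) = (\<integral>\<^sup>+t. ennreal (indicator {..<h/2} t * Gbar \<nu> (h - t) * student_t_pdf \<nu> t) \<partial>lborel)"
    unfolding Jr_def using Gbar_nonneg[OF nu] pdf_pos[OF nu]
    by (subst nn_integral_eq_integral[OF Jr_integrand_integrable]) (auto intro!: AE_I2 simp: less_imp_le)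
  also have "\<dots> = (\<integral>\<^sup>+t. \<integral>\<^sup>+s. ennreal (of_bool (h < s + t \<and> t \<in> {..<h/2}) * (student_t_pdf \<nu> s * student_t_pdf \<nu> t)) \<partial>lborel \<partial>lborel)"
    by (rule rep) simp
  finally show ?thesis by simp
qed

lemma ennreal_Itail: "ennreal (Itail \<nu> h) = (\<integral>\<^sup>+t. \<integral>\<^sup>+s. ennreal (of_bool (h < s + t) * (student_t_pdf \<nu> s * student_t_pdf \<nu> t)) \<partial>lborel \<partial>lborel)"
proof -
  have "ennreal (Itail \<nu> h) = (\<integral>\<^sup>+t. ennreal (Gbar \<nu> (h - t) * student_t_pdf \<nu> t) \<partial>lborel)"
    unfolding Itail_def using Gbar_nonneg[OF nu] pdf_pos[OF nu]
    by (subst nn_integral_eq_integral[OF Gbar_integrand_integrable[OF nu]]) (auto intro!: AE_I2 simp: less_imp_le)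
  also have "\<dots> = (\<integral>\<^sup>+t. ennreal (indicator UNIV t * Gbar \<nu> (h - t) * student_t_pdf \<nu> t) \<partial>lborel)"
    by simp
  also have "\<dots> = (\<integral>\<^sup>+t. \<integral>\<^sup>+s. ennreal (of_bool (h < s + t \<and> t \<in> UNIV) * (student_t_pdf \<nu> s * student_t_pdf \<nu> t)) \<partial>lborel \<partial>lborel)"
    by (rule rep) simp
  finally show ?thesis by simp
qed

lemma swap_part: "(\<integral>\<^sup>+t. \<integral>\<^sup>+s. ennreal (of_bool (h < s + t \<and> s < h/2) * (student_t_pdf \<nu> s * student_t_pdf \<nu> t)) \<partial>lborel \<partial>lborel)
   = ennreal (Jr h)"
proof -
  have "(\<integral>\<^sup>+t. \<integral>\<^sup>+s. ennreal (of_bool (h < s + t \<and> s < h/2) * (student_t_pdf \<nu> s * student_t_pdf \<nu> t)) \<partial>lborel \<partial>lborel)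
     = (\<integral>\<^sup>+s. \<integral>\<^sup>+t. ennreal (of_bool (h < s + t \<and> s < h/2) * (student_t_pdf \<nu> s * student_t_pdf \<nu> t)) \<partial>lborel \<partial>lborel)"
    by (rule lborel_pair.Fubini') (simp add: case_prod_unfold)
  also have "\<dots> = ennreal (Jr h)"
    unfolding ennreal_Jr by (simp add: add.commute mult.commute)
  finally show ?thesis .
qed

lemma corner_part: "(\<integral>\<^sup>+t. \<integral>\<^sup>+s. ennreal (of_bool (h/2 \<le> s \<and> h/2 \<le> t) * (student_t_pdf \<nu> s * student_t_pdf \<nu> t)) \<partial>lborel \<partial>lborel)
   = ennreal (Gbar \<nu> (h/2)) * ennreal (Gbar \<nu> (h/2))"
proof -
  have X: "ennreal (Gbar \<nu> (h/2)) = (\<integral>\<^sup>+s. ennreal (indicator {h/2..} s * student_t_pdf \<nu> s) \<partial>lborel)"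
    unfolding Gbar_nn[OF nu] nn_Ioi_Ici ..
  have "(\<integral>\<^sup>+t. \<integral>\<^sup>+s. ennreal (of_bool (h/2 \<le> s \<and> h/2 \<le> t) * (student_t_pdf \<nu> s * student_t_pdf \<nu> t)) \<partial>lborel \<partial>lborel)
    = (\<integral>\<^sup>+t. (\<integral>\<^sup>+s. ennreal (indicator {h/2..} s * student_t_pdf \<nu> s) \<partial>lborel) * ennreal (indicator {h/2..} t * student_t_pdf \<nu> t) \<partial>lborel)"
  proof (intro nn_integral_cong)
    fix t :: real
    have "(\<integral>\<^sup>+s. ennreal (of_bool (h/2 \<le> s \<and> h/2 \<le> t) * (student_t_pdf \<nu> s * student_t_pdf \<nu> t)) \<partial>lborel)
      = (\<integral>\<^sup>+s. ennreal (indicator {h/2..} s * student_t_pdf \<nu> s) * ennreal (indicator {h/2..} t * student_t_pdf \<nu> t) \<partial>lborel)"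
    proof (intro nn_integral_cong)
      fix s :: real
      show "ennreal (of_bool (h/2 \<le> s \<and> h/2 \<le> t) * (student_t_pdf \<nu> s * student_t_pdf \<nu> t))
        = ennreal (indicator {h/2..} s * student_t_pdf \<nu> s) * ennreal (indicator {h/2..} t * student_t_pdf \<nu> t)"
        using pdf_pos[OF nu, of t] pdf_pos[OF nu, of s]
        by (subst ennreal_mult[symmetric]) (auto simp: indicator_def mult_ac)
    qed
    also have "\<dots> = (\<integral>\<^sup>+s. ennreal (indicator {h/2..} s * student_t_pdf \<nu> s) \<partial>lborel) * ennreal (indicator {h/2..} t * student_t_pdf \<nu> t)"
      by (rule nn_integral_multc) simp
    finally show "(\<integral>\<^sup>+s. ennreal (of_bool (h/2 \<le> s \<and> h/2 \<le> t) * (student_t_pdf \<nu> s * student_t_pdf \<nu> t)) \<partial>lborel)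
      = (\<integral>\<^sup>+s. ennreal (indicator {h/2..} s * student_t_pdf \<nu> s) \<partial>lborel) * ennreal (indicator {h/2..} t * student_t_pdf \<nu> t)" .
  qed
  also have "\<dots> = (\<integral>\<^sup>+s. ennreal (indicator {h/2..} s * student_t_pdf \<nu> s) \<partial>lborel) * (\<integral>\<^sup>+t. ennreal (indicator {h/2..} t * student_t_pdf \<nu> t) \<partial>lborel)"
    by (rule nn_integral_cmult) simp
  finally show ?thesis unfolding X .
qed

lemma pdf_meas2[measurable]: "student_t_pdf \<nu> \<in> borel_measurable lborel"
  by simp

lemma Itail_pos: "Itail \<nu> h > 0"
  unfolding Itail_def using Gbar_pos[OF nu] pdf_pos[OF nu]
  by (intro integral_pos_lborel Gbar_integrand_integrable[OF nu]) simp

lemma Itail_ge: "2 * Jr h \<le> Itail \<nu> h"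
proof -
  let ?G = "\<lambda>s t. student_t_pdf \<nu> s * student_t_pdf \<nu> t"
  have G: "?G s t \<ge> 0" for s t using pdf_pos[OF nu, of s] pdf_pos[OF nu, of t] by simp
  have "ennreal (2 * Jr h) = ennreal (Jr h) + ennreal (Jr h)"
    using Jr_nonneg[of h] by (simp add: ennreal_plus[symmetric])
  also have "\<dots> = (\<integral>\<^sup>+t. \<integral>\<^sup>+s. ennreal (of_bool (h < s + t \<and> t < h/2) * ?G s t + of_bool (h < s + t \<and> s < h/2) * ?G s t) \<partial>lborel \<partial>lborel)"
    apply (subst ennreal_Jr)
    apply (subst swap_part[symmetric])
    by (rule double_add[symmetric]) (use G in auto)
  also have "\<dots> \<le> (\<integral>\<^sup>+t. \<integral>\<^sup>+s. ennreal (of_bool (h < s + t) * ?G s t) \<partial>lborel \<partial>lborel)"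
    by (rule double_mono) (use G in auto)
  also have "\<dots> = ennreal (Itail \<nu> h)" by (rule ennreal_Itail[symmetric])
  finally show ?thesis using Itail_pos[of h] by (subst (asm) ennreal_le_iff) auto
qed

lemma Itail_le: "Itail \<nu> h \<le> 2 * Jr h + (Gbar \<nu> (h/2))\<^sup>2"
proof -
  let ?G = "\<lambda>s t. student_t_pdf \<nu> s * student_t_pdf \<nu> t"
  have G: "?G s t \<ge> 0" for s t using pdf_pos[OF nu, of s] pdf_pos[OF nu, of t] by simp
  have "ennreal (Itail \<nu> h) = (\<integral>\<^sup>+t. \<integral>\<^sup>+s. ennreal (of_bool (h < s + t) * ?G s t) \<partial>lborel \<partial>lborel)"
    by (rule ennreal_Itail)
  also have "\<dots> \<le> (\<integral>\<^sup>+t. \<integral>\<^sup>+s. ennreal (of_bool (h < s + t \<and> t < h/2) * ?G s t +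
        (of_bool (h < s + t \<and> s < h/2) * ?G s t + of_bool (h/2 \<le> s \<and> h/2 \<le> t) * ?G s t)) \<partial>lborel \<partial>lborel)"
  proof (rule double_mono)
    fix s t
    show "of_bool (h < s + t) * ?G s t \<le> of_bool (h < s + t \<and> t < h/2) * ?G s t +
        (of_bool (h < s + t \<and> s < h/2) * ?G s t + of_bool (h/2 \<le> s \<and> h/2 \<le> t) * ?G s t)"
    proof -
      have "(of_bool (h < s + t) :: real) \<le> of_bool (h < s + t \<and> t < h/2) +
        (of_bool (h < s + t \<and> s < h/2) + of_bool (h/2 \<le> s \<and> h/2 \<le> t))"
        by (cases "t < h/2"; cases "s < h/2") auto
      from mult_right_mono[OF this G[of s t]] show ?thesis by (simp add: distrib_right)
    qed
  qed
  also have "\<dots> = ennreal (Jr h) + ((\<integral>\<^sup>+t. \<integral>\<^sup>+s. ennreal (of_bool (h < s + t \<and> s < h/2) * ?G s t) \<partial>lborel \<partial>lborel) +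
       (\<integral>\<^sup>+t. \<integral>\<^sup>+s. ennreal (of_bool (h/2 \<le> s \<and> h/2 \<le> t) * ?G s t) \<partial>lborel \<partial>lborel))"
    apply (subst double_add)
    apply (measurable; fail)+
    using G apply simp
    using G apply (simp add: add_nonneg_nonneg)
    apply (subst double_add)
    apply (measurable; fail)+
    using G apply simp
    using G apply simp
    by (simp add: ennreal_Jr)
  also have "\<dots> = ennreal (Jr h) + (ennreal (Jr h) + ennreal (Gbar \<nu> (h/2)) * ennreal (Gbar \<nu> (h/2)))"
    unfolding swap_part corner_part ..
  also have "\<dots> = ennreal (2 * Jr h + (Gbar \<nu> (h/2))\<^sup>2)"
  proof -
    have a: "ennreal (Gbar \<nu> (h/2)) * ennreal (Gbar \<nu> (h/2)) = ennreal ((Gbar \<nu> (h/2))\<^sup>2)"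
      using Gbar_nonneg[OF nu, of "h/2"] by (subst ennreal_mult[symmetric]) (auto simp: power2_eq_square)
    have b: "ennreal (Jr h) + ennreal ((Gbar \<nu> (h/2))\<^sup>2) = ennreal (Jr h + (Gbar \<nu> (h/2))\<^sup>2)"
      using Jr_nonneg[of h] by (subst ennreal_plus[symmetric]) auto
    have c: "ennreal (Jr h) + ennreal (Jr h + (Gbar \<nu> (h/2))\<^sup>2) = ennreal (Jr h + (Jr h + (Gbar \<nu> (h/2))\<^sup>2))"
      using Jr_nonneg[of h] by (subst ennreal_plus[symmetric]) auto
    show ?thesis unfolding a b c by (simp add: algebra_simps)
  qed
  finally show ?thesis
    using Jr_nonneg[of h] Gbar_nonneg[OF nu, of "h/2"] by (subst (asm) ennreal_le_iff) auto
qed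

end

lemma asy1: fixes t :: real shows "filterlim (\<lambda>h. h - t) at_top at_top" by real_asymp
lemma asy2: fixes n t :: real shows "n > 0 \<Longrightarrow> ((\<lambda>h. (h / (h - t)) powr n) \<longlongrightarrow> 1) at_top" by real_asymp
lemma asy3: fixes n C :: real shows "n > 0 \<Longrightarrow> ((\<lambda>h. C * h powr (- n)) \<longlongrightarrow> 0) at_top"
  using tendsto_mult_right_zero[OF tendsto_neg_powr[OF _ filterlim_ident, of "- n"], of C] by simp

lemma asy4: fixes n :: real shows "n > 0 \<Longrightarrow> ((\<lambda>h. inverse (h powr n)) \<longlongrightarrow> 0) at_top" by real_asymp
lemma asy5: "filterlim (\<lambda>h::real. h / 2) at_top at_top" by real_asymp

context
  fixes \<nu> :: nat
  assumes nu: "1 \<le> \<nu>"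
begin

lemmas Gbar_meas3[measurable] = Gbar_measurable[OF nu]

lemma Gratio: "((\<lambda>h. Gbar \<nu> (h - t) / Gbar \<nu> h) \<longlongrightarrow> 1) at_top"
proof -
  define \<phi> where "\<phi> = (\<lambda>x. Gbar \<nu> x * x powr real \<nu>)"
  have L1: "(\<phi> \<longlongrightarrow> Kc \<nu>) at_top" unfolding \<phi>_def by (rule Gbar_lim[OF nu])
  have L2: "((\<lambda>h. \<phi> (h - t)) \<longlongrightarrow> Kc \<nu>) at_top" by (rule filterlim_compose[OF L1 asy1])
  have L3: "((\<lambda>h. \<phi> (h - t) / \<phi> h * (h / (h - t)) powr real \<nu>) \<longlongrightarrow> Kc \<nu> / Kc \<nu> * 1) at_top"
    using Kc_pos[OF nu] n_pos[OF nu] by (intro tendsto_intros L1 L2 asy2) auto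
  have ev: "\<forall>\<^sub>F h in at_top. \<phi> (h - t) / \<phi> h * (h / (h - t)) powr real \<nu> = Gbar \<nu> (h - t) / Gbar \<nu> h"
  proof (intro eventually_mono[OF eventually_gt_at_top[of "max 0 t"]])
    fix h assume h: "max 0 t < h"
    hence h0: "h > 0" and ht: "h - t > 0" by auto
    have "(h / (h - t)) powr real \<nu> = h powr real \<nu> / (h - t) powr real \<nu>" by (rule powr_divide)
    moreover have "Gbar \<nu> h > 0" "Gbar \<nu> (h - t) > 0" using Gbar_pos[OF nu] by auto
    moreover have "h powr real \<nu> > 0" "(h - t) powr real \<nu> > 0" using h0 ht by auto
    ultimately show "\<phi> (h - t) / \<phi> h * (h / (h - t)) powr real \<nu> = Gbar \<nu> (h - t) / Gbar \<nu> h"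
      unfolding \<phi>_def by (simp add: field_simps)
  qed
  show ?thesis using tendsto_cong[OF ev] L3 Kc_pos[OF nu] by simp
qed

lemma Gbar_half_bound:
  assumes h: "h > 0" and hn: "h\<^sup>2 \<ge> real \<nu>" and t: "t < h / 2"
  shows "Gbar \<nu> (h - t) \<le> 2 powr (real \<nu> + (real \<nu> + 1) / 2) * Gbar \<nu> h"
proof -
  define a where "a = (real \<nu> + 1) / 2"
  have "Gbar \<nu> (h - t) \<le> Gbar \<nu> (h / 2)" using t by (intro Gbar_mono[OF nu]) simp
  also have "\<dots> \<le> Kc \<nu> * (h / 2) powr (- real \<nu>)" using h by (intro Gbar_upper[OF nu]) simp
  also have "(h / 2) powr (- real \<nu>) = 2 powr real \<nu> * h powr (- real \<nu>)"
    unfolding powr_divide powr_minus by (simp add: divide_inverse mult.commute)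
  also have "Kc \<nu> * (2 powr real \<nu> * h powr (- real \<nu>))
      = 2 powr (real \<nu> + a) * (Kc \<nu> * 2 powr (- a) * h powr (- real \<nu>))"
  proof -
    have F: "2 powr (real \<nu> + a) * 2 powr (- a) = 2 powr real \<nu>" by (simp add: powr_add[symmetric])
    have "2 powr (real \<nu> + a) * (Kc \<nu> * 2 powr (- a) * h powr (- real \<nu>))
        = Kc \<nu> * ((2 powr (real \<nu> + a) * 2 powr (- a)) * h powr (- real \<nu>))" by (simp only: mult_ac)
    thus ?thesis using F by simp
  qed
  also have "\<dots> \<le> 2 powr (real \<nu> + a) * (Kc \<nu> * (1 + real \<nu> / h\<^sup>2) powr (- a) * h powr (- real \<nu>))"
  proof -
    have "1 + real \<nu> / h\<^sup>2 \<le> 2" using hn h by (simp add: divide_le_eq_1)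
    hence "2 powr (- a) \<le> (1 + real \<nu> / h\<^sup>2) powr (- a)"
      unfolding a_def by (intro powr_mono2') (auto simp: add_pos_nonneg)
    thus ?thesis using Kc_pos[OF nu] by (intro mult_left_mono mult_right_mono) auto
  qed
  also have "\<dots> \<le> 2 powr (real \<nu> + a) * Gbar \<nu> h"
    using Gbar_lower[OF nu h] unfolding a_def by (intro mult_left_mono) auto
  finally show ?thesis unfolding a_def .
qed

lemma Jr_ratio: "((\<lambda>h. Jr \<nu> h / Gbar \<nu> h) \<longlongrightarrow> 1) at_top"
proof -
  define M where "M = 2 powr (real \<nu> + (real \<nu> + 1) / 2)"
  define S where "S = (\<lambda>h t. indicator {..<h/2} t * (Gbar \<nu> (h - t) / Gbar \<nu> h) * student_t_pdf \<nu> t)"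
  have eq: "Jr \<nu> h / Gbar \<nu> h = (LINT t|lborel. S h t)" for h
  proof -
    have "(\<lambda>t. S h t) = (\<lambda>t. (indicator {..<h/2} t * Gbar \<nu> (h - t) * student_t_pdf \<nu> t) / Gbar \<nu> h)"
      by (rule ext) (simp add: S_def)
    thus ?thesis using Jr_def[OF nu, of h] by simp
  qed
  have "((\<lambda>h. LINT t|lborel. S h t) \<longlongrightarrow> (LINT t|lborel. student_t_pdf \<nu> t)) at_top"
  proof (rule integral_dominated_convergence_at_top[where w="\<lambda>t. M * student_t_pdf \<nu> t"])
    show "student_t_pdf \<nu> \<in> borel_measurable lborel" by simp
    show "S h \<in> borel_measurable lborel" for h unfolding S_def measurable_lborel2 by measurable
    show "integrable lborel (\<lambda>t. M * student_t_pdf \<nu> t)"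
      by (intro integrable_mult_right pdf_integrable[OF nu])
    show "AE t in lborel. ((\<lambda>h. S h t) \<longlongrightarrow> student_t_pdf \<nu> t) at_top"
    proof (intro AE_I2)
      fix t :: real
      have ev: "\<forall>\<^sub>F h in at_top. Gbar \<nu> (h - t) / Gbar \<nu> h * student_t_pdf \<nu> t = S h t"
        by (intro eventually_mono[OF eventually_gt_at_top[of "2 * t"]]) (auto simp: S_def indicator_def)
      have "((\<lambda>h. Gbar \<nu> (h - t) / Gbar \<nu> h * student_t_pdf \<nu> t) \<longlongrightarrow> 1 * student_t_pdf \<nu> t) at_top"
        by (intro tendsto_intros Gratio)
      thus "((\<lambda>h. S h t) \<longlongrightarrow> student_t_pdf \<nu> t) at_top"
        using tendsto_cong[OF ev] by simp
    qed
    show "\<forall>\<^sub>F h in at_top. AE t in lborel. norm (S h t) \<le> M * student_t_pdf \<nu> t"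
    proof (intro eventually_mono[OF eventually_gt_at_top[of "max 0 (sqrt (real \<nu>))"]] AE_I2)
      fix h t :: real assume h: "max 0 (sqrt (real \<nu>)) < h"
      have hs': "sqrt (real \<nu>) < h" using h by simp
      hence h0: "h > 0" and hs: "sqrt (real \<nu>) \<le> h" using real_sqrt_ge_zero[of "real \<nu>"] by linarith+
      have "(sqrt (real \<nu>))\<^sup>2 \<le> h\<^sup>2" using hs by (intro power_mono) auto
      hence hn: "h\<^sup>2 \<ge> real \<nu>" by simp
      have Gp: "Gbar \<nu> h > 0" "Gbar \<nu> (h - t) \<ge> 0" using Gbar_pos[OF nu] Gbar_nonneg[OF nu] by auto
      have pp: "student_t_pdf \<nu> t > 0" by (rule pdf_pos[OF nu])
      show "norm (S h t) \<le> M * student_t_pdf \<nu> t"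
      proof (cases "t < h / 2")
        case True
        have "Gbar \<nu> (h - t) / Gbar \<nu> h \<le> M"
          using Gbar_half_bound[OF h0 hn True] Gp unfolding M_def by (subst pos_divide_le_eq) (auto simp: mult.commute)
        hence "Gbar \<nu> (h - t) / Gbar \<nu> h * student_t_pdf \<nu> t \<le> M * student_t_pdf \<nu> t"
          using pp by (intro mult_right_mono) auto
        moreover have "norm (S h t) = Gbar \<nu> (h - t) / Gbar \<nu> h * student_t_pdf \<nu> t"
          using True Gp pp unfolding S_def by (simp add: abs_mult)
        ultimately show ?thesis by simp
      next
        case False
        thus ?thesis using pp unfolding S_def M_def by simp
      qed
    qed
  qed
  thus ?thesis unfolding eq pdf_integral[OF nu] .
qed

lemma Jr_lim: "((\<lambda>h. Jr \<nu> h * h powr real \<nu>) \<longlongrightarrow> Kc \<nu>) at_top"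
proof -
  have "((\<lambda>h. (Jr \<nu> h / Gbar \<nu> h) * (Gbar \<nu> h * h powr real \<nu>)) \<longlongrightarrow> 1 * Kc \<nu>) at_top"
    by (intro tendsto_mult Jr_ratio Gbar_lim[OF nu])
  moreover have "(Jr \<nu> h / Gbar \<nu> h) * (Gbar \<nu> h * h powr real \<nu>) = Jr \<nu> h * h powr real \<nu>" for h
    using Gbar_pos[OF nu, of h] by simp
  ultimately show ?thesis by simp
qed

lemma Itail_lim: "((\<lambda>h. Itail \<nu> h * h powr real \<nu>) \<longlongrightarrow> 2 * Kc \<nu>) at_top"
proof (rule tendsto_sandwich)
  define Q where "Q = (\<lambda>h. Gbar \<nu> (h / 2) * (h / 2) powr real \<nu>)"
  define T where "T = 2 powr real \<nu>"
  have Q: "(Q \<longlongrightarrow> Kc \<nu>) at_top"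
    unfolding Q_def by (rule filterlim_compose[OF Gbar_lim[OF nu] asy5])
  show "((\<lambda>h. 2 * (Jr \<nu> h * h powr real \<nu>)) \<longlongrightarrow> 2 * Kc \<nu>) at_top"
    by (intro tendsto_intros Jr_lim)
  have "((\<lambda>h. 2 * (Jr \<nu> h * h powr real \<nu>) + (Q h)\<^sup>2 * T\<^sup>2 * inverse (h powr real \<nu>)) \<longlongrightarrow> 2 * Kc \<nu> + (Kc \<nu>)\<^sup>2 * T\<^sup>2 * 0) at_top"
    using n_pos[OF nu] by (intro tendsto_intros Jr_lim Q asy4)
  thus "((\<lambda>h. 2 * (Jr \<nu> h * h powr real \<nu>) + (Q h)\<^sup>2 * T\<^sup>2 * inverse (h powr real \<nu>)) \<longlongrightarrow> 2 * Kc \<nu>) at_top"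
    by simp
  show "\<forall>\<^sub>F h in at_top. 2 * (Jr \<nu> h * h powr real \<nu>) \<le> Itail \<nu> h * h powr real \<nu>"
  proof (intro eventually_mono[OF eventually_gt_at_top[of 0]])
    fix h :: real assume h: "h > 0"
    show "2 * (Jr \<nu> h * h powr real \<nu>) \<le> Itail \<nu> h * h powr real \<nu>"
      using mult_right_mono[OF Itail_ge[OF nu, of h], of "h powr real \<nu>"] by simp
  qed
  show "\<forall>\<^sub>F h in at_top. Itail \<nu> h * h powr real \<nu> \<le> 2 * (Jr \<nu> h * h powr real \<nu>) + (Q h)\<^sup>2 * T\<^sup>2 * inverse (h powr real \<nu>)"
  proof (intro eventually_mono[OF eventually_gt_at_top[of 0]])
    fix h :: real assume h: "h > 0"
    define X where "X = h powr real \<nu>"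
    have X: "X > 0" unfolding X_def using h by simp
    have T: "T > 0" unfolding T_def by simp
    have QX: "Q h = Gbar \<nu> (h / 2) * (X / T)"
      unfolding Q_def X_def T_def by (simp add: powr_divide)
    have "Itail \<nu> h * X \<le> (2 * Jr \<nu> h + (Gbar \<nu> (h/2))\<^sup>2) * X"
      using X by (intro mult_right_mono Itail_le[OF nu]) auto
    also have "\<dots> = 2 * (Jr \<nu> h * X) + (Q h)\<^sup>2 * T\<^sup>2 * inverse X"
      unfolding QX using X T by (simp add: field_simps power2_eq_square)
    finally show "Itail \<nu> h * h powr real \<nu> \<le> 2 * (Jr \<nu> h * h powr real \<nu>) + (Q h)\<^sup>2 * T\<^sup>2 * inverse (h powr real \<nu>)"
      unfolding X_def .
  qed
qed

end

lemma frechet_eq: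
  assumes nu: "1 \<le> \<nu>" and p: "0 < p" "p < 1"
  shows "frechet_quantile \<nu> p = (- ln p) powr (- (1 / real \<nu>))"
proof -
  have n: "real \<nu> > 0" using nu by simp
  have m: "- ln p > 0" using p by simp
  define q0 where "q0 = (- ln p) powr (- (1 / real \<nu>))"
  have q0: "q0 > 0" unfolding q0_def using m by simp
  have q0n: "q0 powr (- real \<nu>) = - ln p"
    unfolding q0_def using m n by (simp add: powr_powr)
  show ?thesis unfolding frechet_quantile_def q0_def[symmetric]
  proof (rule the_equality)
    show "0 < q0 \<and> exp (- (q0 powr (- real \<nu>))) = p" using q0 q0n p by simp
    fix q assume q: "0 < q \<and> exp (- (q powr (- real \<nu>))) = p"
    hence "- (q powr (- real \<nu>)) = ln p" using p by (metis ln_exp)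
    hence "q powr (- real \<nu>) = - ln p" by simp
    hence "(q powr (- real \<nu>)) powr (- (1 / real \<nu>)) = q0" unfolding q0_def by simp
    thus "q = q0" using q n by (simp add: powr_powr)
  qed
qed

lemma Kc_eq:
  assumes nu: "1 \<le> \<nu>"
  shows "Kc \<nu> = Gamma ((real \<nu> + 1) / 2) /
      (real \<nu> powr (1 - real \<nu> / 2) * sqrt pi * Gamma (real \<nu> / 2))"
proof -
  define n where "n = real \<nu>"
  have n: "n > 0" unfolding n_def using nu by simp
  have e: "n powr ((n + 1) / 2) * n powr (1 - n / 2) = n * sqrt n"
  proof -
    have "n powr ((n + 1) / 2) * n powr (1 - n / 2) = n powr (1 + 1 / 2)"
      using n by (simp add: powr_add[symmetric] field_simps)
    also have "\<dots> = n powr 1 * n powr (1 / 2)" by (rule powr_add)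
    also have "\<dots> = n * sqrt n" using n by (simp add: powr_half_sqrt)
    finally show ?thesis .
  qed
  have g1: "Gamma (n / 2) > 0" "Gamma ((n + 1) / 2) > 0" using n by (auto intro!: Gamma_real_pos)
  have p1: "n powr (1 - n / 2) > 0" "sqrt pi > 0" "sqrt n > 0" using n by auto
  have "Kc \<nu> = Gamma ((n + 1) / 2) * n powr ((n + 1) / 2) / (n * sqrt n * sqrt pi * Gamma (n / 2))"
    unfolding Kc_def C0_def n_def[symmetric] by (simp add: real_sqrt_mult field_simps)
  also have "\<dots> = Gamma ((n + 1) / 2) / (n powr (1 - n / 2) * sqrt pi * Gamma (n / 2))"
    unfolding e[symmetric] using g1 p1 n by (simp add: field_simps)
  finally show ?thesis unfolding n_def .
qed

lemma gamma_nu_eq: "1 \<le> \<nu> \<Longrightarrow> gamma_nu \<nu> = Kc \<nu> powr (1 / real \<nu>)"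
  unfolding gamma_nu_def Kc_eq by simp

lemma asy_r0: "0 < p \<Longrightarrow> ((\<lambda>k::nat. 1 - p powr (1 / real k)) \<longlongrightarrow> 0) at_top" by real_asymp
lemma asy_kr: "0 < p \<Longrightarrow> p < 1 \<Longrightarrow> ((\<lambda>k::nat. real k * (1 - p powr (1 / real k))) \<longlongrightarrow> - ln p) at_top"
  by real_asymp

lemma Itail_zero:
  assumes nu: "1 \<le> \<nu>"
  shows "(Itail \<nu> \<longlongrightarrow> 0) at_top"
proof -
  from tendsto_mult[OF Itail_lim[OF nu] asy4[OF n_pos[OF nu]]]
  have "((\<lambda>h. (Itail \<nu> h * h powr real \<nu>) * inverse (h powr real \<nu>)) \<longlongrightarrow> 2 * Kc \<nu> * 0) at_top" .
  hence L: "((\<lambda>h. (Itail \<nu> h * h powr real \<nu>) * inverse (h powr real \<nu>)) \<longlongrightarrow> 0) at_top"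
    by (simp only: mult_zero_right)
  have ev: "\<forall>\<^sub>F h in at_top. (Itail \<nu> h * h powr real \<nu>) * inverse (h powr real \<nu>) = Itail \<nu> h"
    by (intro eventually_mono[OF eventually_gt_at_top[of 0]]) simp
  show ?thesis by (rule Lim_transform_eventually[OF L ev])
qed

lemma h2_char:
  assumes nu: "1 \<le> \<nu>" and p: "0 < p" "p < 1" and k: "k \<ge> 1"
    and rk: "1 - p powr (1 / real k) < 1 / 2"
  shows "Itail \<nu> (h2 \<nu> p k) = 1 - p powr (1 / real k)"
proof -
  define r where "r = 1 - p powr (1 / real k)"
  have kpos: "real k > 0" using k by simp
  have pk: "p powr (1 / real k) < 1"
  proof -
    have "p powr (1 / real k) < 1 powr (1 / real k)"
      using p kpos by (intro powr_less_mono2) auto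
    thus ?thesis by simp
  qed
  have r0: "r > 0" unfolding r_def using pk by simp
  have Ilt1: "Itail \<nu> h < 1" for h
    using Itail_minus[OF nu, of "- h"] Itail_pos[OF nu, of "- h"] by simp
  obtain B where B: "\<And>h. h \<ge> B \<Longrightarrow> Itail \<nu> h < r"
    using order_tendstoD(2)[OF Itail_zero[OF nu] r0] unfolding eventually_at_top_linorder by auto
  define B' where "B' = max B 0"
  have "\<exists>x\<ge>0. x \<le> B' \<and> Itail \<nu> x = r"
  proof (rule IVT2')
    show "Itail \<nu> B' \<le> r" using B[of B'] unfolding B'_def by simp
    show "r \<le> Itail \<nu> 0" using Itail_half[OF nu] rk unfolding r_def by simp
    show "0 \<le> B'" unfolding B'_def by simp
    show "continuous_on {0..B'} (Itail \<nu>)" using Itail_cont[OF nu] by (rule continuous_on_subset) simp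
  qed
  then obtain H where H: "Itail \<nu> H = r" by blast
  define F where "F = (\<lambda>h. LINT t|lborel. student_t_cdf \<nu> (t + h) * student_t_pdf \<nu> t)"
  have F: "F h = 1 - Itail \<nu> h" for h unfolding F_def by (rule F_eq[OF nu])
  have hF: "h2 \<nu> p k = (THE h. F h ^ k = p)" unfolding h2_def F_def ..
  have "h2 \<nu> p k = H"
    unfolding hF
  proof (rule the_equality)
    have "F H = p powr (1 / real k)" using F H unfolding r_def by simp
    hence "F H ^ k = (p powr (1 / real k)) powr real k" using p by (simp add: powr_realpow)
    also have "\<dots> = p" using p kpos by (simp add: powr_powr)
    finally show "F H ^ k = p" .
  next
    fix h assume h: "F h ^ k = p"
    have Fpos: "F h > 0" using F Ilt1[of h] by simp
    have "(F h ^ k) powr (1 / real k) = (F h powr real k) powr (1 / real k)"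
      by (subst powr_realpow[OF Fpos]) (rule refl)
    also have "\<dots> = F h powr (real k * (1 / real k))" by (rule powr_powr)
    also have "\<dots> = F h" using kpos Fpos by simp
    finally have "F h = (F h ^ k) powr (1 / real k)" by simp
    hence "F h = p powr (1 / real k)" using h by simp
    hence Ih: "Itail \<nu> h = Itail \<nu> H" using F H unfolding r_def by simp
    show "h = H"
    proof (rule ccontr)
      assume "h \<noteq> H"
      hence "h < H \<or> H < h" by auto
      thus False using Itail_strict_mono[OF nu, of h H] Itail_strict_mono[OF nu, of H h] Ih by auto
    qed
  qed
  thus ?thesis using H unfolding r_def by simp
qed

theorem theorem5:
  fixes \<nu> :: nat and p :: real
  assumes "\<nu> \<ge> 1" and "0 < p" and "p < 1"
  shows "(\<lambda>k. h2 \<nu> p k) \<sim>[at_top]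
         (\<lambda>k. 2 powr (1 / real \<nu>) * gamma_nu \<nu> * real k powr (1 / real \<nu>) * frechet_quantile \<nu> p)"
proof -
  have nu: "1 \<le> \<nu>" using assms by simp
  have p: "0 < p" "p < 1" using assms by auto
  define n where "n = real \<nu>"
  have n: "n > 0" unfolding n_def using nu by simp
  define r where "r = (\<lambda>k::nat. 1 - p powr (1 / real k))"
  define H where "H = (\<lambda>k. h2 \<nu> p k)"
  define m where "m = - ln p"
  have m: "m > 0" unfolding m_def using p by simp
  have r0: "(r \<longlongrightarrow> 0) at_top" unfolding r_def using asy_r0[OF p(1)] .
  have kr: "((\<lambda>k. real k * r k) \<longlongrightarrow> m) at_top" unfolding r_def m_def using asy_kr[OF p] .
  have ev_small: "\<forall>\<^sub>F k in at_top. r k < 1 / 2" by (rule order_tendstoD(2)[OF r0]) simp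
  have key: "\<forall>\<^sub>F k in at_top. Itail \<nu> (H k) = r k"
    using ev_small eventually_ge_at_top[of "1::nat"]
  proof eventually_elim
    case (elim k)
    thus ?case unfolding H_def r_def using h2_char[OF nu p, of k] by simp
  qed
  have rpos: "\<forall>\<^sub>F k in at_top. r k > 0"
    using key
  proof eventually_elim
    case (elim k)
    thus ?case using Itail_pos[OF nu, of "H k"] by simp
  qed
  have Hinf: "filterlim H at_top at_top"
    unfolding filterlim_at_top
  proof
    fix Z :: real
    have "\<forall>\<^sub>F k in at_top. r k < Itail \<nu> Z" by (rule order_tendstoD(2)[OF r0 Itail_pos[OF nu]])
    with key show "\<forall>\<^sub>F k in at_top. Z \<le> H k"
    proof eventually_elim
      case (elim k)
      show ?case
      proof (rule ccontr)
        assume "\<not> Z \<le> H k"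
        hence "H k < Z" by simp
        from Itail_strict_mono[OF nu this] elim show False by simp
      qed
    qed
  qed
  have Hpos: "\<forall>\<^sub>F k in at_top. H k > 0"
    using Hinf unfolding filterlim_at_top_dense by blast
  have lim1: "((\<lambda>k. Itail \<nu> (H k) * H k powr n) \<longlongrightarrow> 2 * Kc \<nu>) at_top"
    unfolding n_def by (rule filterlim_compose[OF Itail_lim[OF nu] Hinf])
  have lim2: "((\<lambda>k. r k * H k powr n) \<longlongrightarrow> 2 * Kc \<nu>) at_top"
    by (rule Lim_transform_eventually[OF lim1]) (use key in \<open>eventually_elim, simp\<close>)
  have lim3: "((\<lambda>k. (r k * H k powr n) / (real k * r k)) \<longlongrightarrow> 2 * Kc \<nu> / m) at_top"
    using m by (intro tendsto_divide lim2 kr) simp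
  have L0: "2 * Kc \<nu> / m > 0" using m Kc_pos[OF nu] by simp
  have lim4: "((\<lambda>k. ((r k * H k powr n) / (real k * r k)) powr (1 / n)) \<longlongrightarrow> (2 * Kc \<nu> / m) powr (1 / n)) at_top"
    using L0 m Kc_pos[OF nu] by (intro tendsto_powr lim3 tendsto_const) simp
  define Cst where "Cst = 2 powr (1 / n) * gamma_nu \<nu> * frechet_quantile \<nu> p"
  have Cst: "Cst = (2 * Kc \<nu> / m) powr (1 / n)"
  proof -
    have "(2 * Kc \<nu> / m) powr (1 / n) = (2 powr (1 / n) * Kc \<nu> powr (1 / n)) / m powr (1 / n)"
      by (simp only: powr_divide powr_mult)
    also have "\<dots> = 2 powr (1 / n) * Kc \<nu> powr (1 / n) * m powr (- (1 / n))"
      by (simp only: powr_minus divide_inverse)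
    finally show ?thesis
      unfolding Cst_def gamma_nu_eq[OF nu] frechet_eq[OF nu p] n_def[symmetric] m_def[symmetric] by simp
  qed
  have Cpos: "Cst > 0" unfolding Cst using m Kc_pos[OF nu] by simp
  have lim5: "((\<lambda>k. ((r k * H k powr n) / (real k * r k)) powr (1 / n) / Cst) \<longlongrightarrow> 1) at_top"
  proof -
    have "((\<lambda>k. ((r k * H k powr n) / (real k * r k)) powr (1 / n) / Cst) \<longlongrightarrow> Cst / Cst) at_top"
      unfolding Cst using L0 m Kc_pos[OF nu] by (intro tendsto_divide lim4 tendsto_const) simp
    thus ?thesis using Cpos by simp
  qed
  have ev_eq: "\<forall>\<^sub>F k in at_top. ((r k * H k powr n) / (real k * r k)) powr (1 / n) / Cst
      = H k / (2 powr (1 / real \<nu>) * gamma_nu \<nu> * real k powr (1 / real \<nu>) * frechet_quantile \<nu> p)"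
    using rpos Hpos eventually_ge_at_top[of "1::nat"]
  proof eventually_elim
    case (elim k)
    have k: "real k > 0" using elim by simp
    have "(r k * H k powr n) / (real k * r k) = H k powr n / real k" using elim by simp
    hence "((r k * H k powr n) / (real k * r k)) powr (1 / n) = (H k powr n) powr (1 / n) / real k powr (1 / n)"
      by (simp only: powr_divide)
    also have "(H k powr n) powr (1 / n) = H k" using n elim by (simp add: powr_powr)
    finally have e: "((r k * H k powr n) / (real k * r k)) powr (1 / n) = H k / real k powr (1 / n)" .
    have "2 powr (1 / real \<nu>) * gamma_nu \<nu> * real k powr (1 / real \<nu>) * frechet_quantile \<nu> p
        = Cst * real k powr (1 / n)" unfolding Cst_def n_def by (simp only: mult_ac)
    thus ?case unfolding e by simp
  qed
  have "((\<lambda>k. H k / (2 powr (1 / real \<nu>) * gamma_nu \<nu> * real k powr (1 / real \<nu>) * frechet_quantile \<nu> p)) \<longlongrightarrow> 1) at_top"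
    by (rule Lim_transform_eventually[OF lim5 ev_eq])
  thus ?thesis unfolding H_def by (rule asymp_equivI')
qed

end
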